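(* Let $J$ be a prime, $T,B>0$ with $JBT=1$, $R=[0,T)\times[0,B)$, and let $C$ be a scattering function with $\operatorname{supp}C\subseteq\bigcup_{j=1}^J\big(R+(a_jT,b_jB)\big)$ for pairwise distinct integer pairs $(a_j,b_j)$. Put $C_j(t,\gamma)=\chi_R(t,\gamma)\,C(t+a_jT,\gamma+b_jB)$ and $P_h(\tau,t)=\int e^{-2\pi i\gamma\tau}C(t,\gamma)\,d\gamma$. Let $(c_k)_{k\in\mathbb Z}$ be a $J$-periodic complex sequence, and define for $n\in\mathbb Z$, $0\le t<T$, $$\Pi_n(t)=\sum_{k\in\mathbb Z}\overline{c_{k+n}}\,c_k\,P_h(nT,t-kT),\qquad S_r(t,\gamma)=\frac1B\sum_{m\in\mathbb Z}e^{2\pi i\gamma T(mJ+r)}\,\Pi_{mJ+r}(t),\quad r=1,\dots,J.$$ Then for all $t\in[0,T)$, $\gamma\in[0,B)$ and $r=1,\dots,J$, $$S_r(t,\gamma)=\sum_{j=1}^J e^{-2\pi i r b_j/J}\,\overline{c_{r-a_j}}\,c_{-a_j}\,C_j(t,\gamma).$$ Consequently, if the $J\times J$ matrix $A$ with entries $A_{rj}=e^{-2\pi i r b_j/J}\,\overline{c_{r-a_j}}\,c_{-a_j}$ is invertible, with inverse $V=(V_{jr})$, then for all $j=1,\dots,J$, $t\in[0,T)$, $\gamma\in[0,B)$, $$C_j(t,\gamma)=\sum_{r=1}^J V_{jr}\,\frac1B\sum_{m\in\mathbb Z}e^{2\pi i\gamma T(mJ+r)}\,\Pi_{mJ+r}(t),$$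 and $C(t,\gamma)=\sum_{j=1}^J C_j(t-a_jT,\gamma-b_jB)$.
   Context: $\chi_R$ is the indicator function of $R$; $\overline{z}$ denotes complex conjugation. For the echo $y=Hx$ of the sounding signal $x(t)=\sum_k c_k\delta(t-kT)$ through a WSSUS operator with scattering function $C$, the functions $\Pi_n$ are exactly the second-order statistics of the echo: $\mathbb E\{\overline{y(t+nT)}\,y(\tau)\}=\Pi_n(t)\,\delta(t-\tau)$ for $0\le t,\tau<T$. The matrix $A$ equals $U^*D$ where $U$ has columns given by the Gabor (time-frequency shifted) vectors $c_{a_j,b_j}(r)=e^{-2\pi i r b_j/J}c_{r-a_j}$ (up to conjugation convention) and $D=\mathrm{diag}(c_{-a_j})$; sums over $m$ converge in the distributional sense. *)

theory Defs
  imports "HOL-Analysis.Analysis"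
begin

definition test_fun :: "real set \<Rightarrow> (real \<Rightarrow> real) \<Rightarrow> bool" where
  "test_fun U \<phi> \<longleftrightarrow>
     (\<forall>n x. ((deriv ^^ n) \<phi>) differentiable (at x)) \<and>
     compact (closure {x. \<phi> x \<noteq> 0}) \<and> closure {x. \<phi> x \<noteq> 0} \<subseteq> U"

definition rect :: "real \<Rightarrow> real \<Rightarrow> (real \<times> real) set" where
  "rect T B = {0..<T} \<times> {0..<B}"

definition Cj :: "(real \<Rightarrow> real \<Rightarrow> real) \<Rightarrow> (nat \<Rightarrow> int) \<Rightarrow> (nat \<Rightarrow> int) \<Rightarrow> real \<Rightarrow> real
                  \<Rightarrow> nat \<Rightarrow> real \<Rightarrow> real \<Rightarrow> real" where
  "Cj C a b T B j t \<gamma> = indicator (rect T B) (t, \<gamma>) * C (t + of_int (a j) * T) (\<gamma> + of_int (b j) * B)"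

definition Ph :: "(real \<Rightarrow> real \<Rightarrow> real) \<Rightarrow> real \<Rightarrow> real \<Rightarrow> complex" where
  "Ph C \<tau> t = (LINT \<gamma>|lborel. cis (- 2 * pi * \<gamma> * \<tau>) * of_real (C t \<gamma>))"

definition Pi_fun :: "(real \<Rightarrow> real \<Rightarrow> real) \<Rightarrow> (int \<Rightarrow> complex) \<Rightarrow> real \<Rightarrow> int \<Rightarrow> real \<Rightarrow> complex" where
  "Pi_fun C c T n t = (\<Sum>\<^sub>\<infinity>k::int. cnj (c (k + n)) * c k * Ph C (of_int n * T) (t - of_int k * T))"

definition A_ent :: "(int \<Rightarrow> complex) \<Rightarrow> (nat \<Rightarrow> int) \<Rightarrow> (nat \<Rightarrow> int) \<Rightarrow> nat \<Rightarrow> nat \<Rightarrow> nat \<Rightarrow> complex" where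
  "A_ent c a b J r j = cis (- 2 * pi * of_nat r * of_int (b j) / of_nat J) * cnj (c (int r - a j)) * c (- a j)"

definition is_inverse_mat :: "nat \<Rightarrow> (nat \<Rightarrow> nat \<Rightarrow> complex) \<Rightarrow> (nat \<Rightarrow> nat \<Rightarrow> complex) \<Rightarrow> bool" where
  "is_inverse_mat J A V \<longleftrightarrow>
     (\<forall>i\<in>{1..J}. \<forall>k\<in>{1..J}. (\<Sum>l=1..J. A i l * V l k) = (if i = k then 1 else 0)) \<and>
     (\<forall>i\<in>{1..J}. \<forall>k\<in>{1..J}. (\<Sum>l=1..J. V i l * A l k) = (if i = k then 1 else 0))"

text \<open>Pairing of the m-th term of S_r with a test function phi:
  (1/B) Pi_(mJ+r)(t) * integral phi(gamma) exp(2 pi i gamma T (mJ+r)) d gamma.\<close>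
definition S_term :: "(real \<Rightarrow> real \<Rightarrow> real) \<Rightarrow> (int \<Rightarrow> complex) \<Rightarrow> nat \<Rightarrow> real \<Rightarrow> real
                      \<Rightarrow> nat \<Rightarrow> real \<Rightarrow> (real \<Rightarrow> real) \<Rightarrow> int \<Rightarrow> complex" where
  "S_term C c J T B r t \<phi> m =
     of_real (1 / B) * Pi_fun C c T (m * int J + int r) t *
     (LINT \<gamma>|lborel. of_real (\<phi> \<gamma>) * cis (2 * pi * \<gamma> * T * of_int (m * int J + int r)))"

end

theory Submission
  imports Defs
begin


lemma tail_uniform:
  fixes d :: "int \<Rightarrow> complex" and E :: "int \<Rightarrow> real \<Rightarrow> complex"
  assumes ds: "(\<lambda>m. norm (d m)) summable_on UNIV"
    and E1: "\<And>m x. x \<in> X \<Longrightarrow> norm (E m x) \<le> 1"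
  shows "\<And>x. x \<in> X \<Longrightarrow> (\<lambda>m. d m * E m x) summable_on UNIV"
    and "\<And>e. e > 0 \<Longrightarrow> \<forall>\<^sub>F F in finite_subsets_at_top UNIV. \<forall>x\<in>X.
            norm (infsum (\<lambda>m. d m * E m x) UNIV - sum (\<lambda>m. d m * E m x) F) \<le> e"
proof -
  have abs: "(\<lambda>m. norm (d m * E m x)) summable_on A" if "x \<in> X" for x A
  proof -
    have "(\<lambda>m. norm (d m)) summable_on A"
      using ds summable_on_subset by (metis subset_UNIV)
    then show ?thesis
      by (rule summable_on_comparison_test)
         (use E1[OF that] in \<open>auto simp: norm_mult intro: mult_left_le\<close>)
  qed
  show sm: "(\<lambda>m. d m * E m x) summable_on UNIV" if "x \<in> X" for x
    by (rule Infinite_Sum.abs_summable_summable[OF abs[OF that]])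
  fix e :: real assume e: "e > 0"
  define D where "D = infsum (\<lambda>m. norm (d m)) UNIV"
  have "((\<lambda>m. norm (d m)) has_sum D) UNIV"
    using ds D_def by (simp add: summable_iff_has_sum_infsum)
  then have "(sum (\<lambda>m. norm (d m)) \<longlongrightarrow> D) (finite_subsets_at_top UNIV)"
    by (simp add: has_sum_def)
  then have ev: "\<forall>\<^sub>F F in finite_subsets_at_top UNIV. dist (sum (\<lambda>m. norm (d m)) F) D < e"
    using e tendstoD by blast
  show "\<forall>\<^sub>F F in finite_subsets_at_top UNIV. \<forall>x\<in>X.
            norm (infsum (\<lambda>m. d m * E m x) UNIV - sum (\<lambda>m. d m * E m x) F) \<le> e"
  proof (rule eventually_mono[OF eventually_conj[OF ev eventually_finite_subsets_at_top_weakI]])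
    fix F :: "int set"
    assume H: "dist (sum (\<lambda>m. norm (d m)) F) D < e \<and> finite F"
    show "\<forall>x\<in>X. norm (infsum (\<lambda>m. d m * E m x) UNIV - sum (\<lambda>m. d m * E m x) F) \<le> e"
    proof
      fix x assume x: "x \<in> X"
      have fF: "finite F" using H by blast
      have s1: "(\<lambda>m. d m * E m x) summable_on (UNIV - F)"
        by (rule Infinite_Sum.abs_summable_summable[OF abs[OF x]])
      have "infsum (\<lambda>m. d m * E m x) UNIV = infsum (\<lambda>m. d m * E m x) (F \<union> (UNIV - F))"
        by simp
      also have "\<dots> = sum (\<lambda>m. d m * E m x) F + infsum (\<lambda>m. d m * E m x) (UNIV - F)"
        by (subst infsum_Un_disjoint) (use fF s1 in auto)
      finally have eq: "infsum (\<lambda>m. d m * E m x) UNIV - sum (\<lambda>m. d m * E m x) F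
          = infsum (\<lambda>m. d m * E m x) (UNIV - F)" by simp
      have dsF: "(\<lambda>m. norm (d m)) summable_on (UNIV - F)"
        using ds summable_on_subset by (metis subset_UNIV)
      have "norm (infsum (\<lambda>m. d m * E m x) (UNIV - F)) \<le> infsum (\<lambda>m. norm (d m * E m x)) (UNIV - F)"
        by (rule norm_infsum_bound) (use abs[OF x] in auto)
      also have "\<dots> \<le> infsum (\<lambda>m. norm (d m)) (UNIV - F)"
        by (rule infsum_mono) (use abs[OF x] dsF E1[OF x] in \<open>auto simp: norm_mult intro: mult_left_le\<close>)
      also have "infsum (\<lambda>m. norm (d m)) (UNIV - F) = D - sum (\<lambda>m. norm (d m)) F"
      proof -
        have "D = infsum (\<lambda>m. norm (d m)) (F \<union> (UNIV - F))" by (simp add: D_def)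
        also have "\<dots> = sum (\<lambda>m. norm (d m)) F + infsum (\<lambda>m. norm (d m)) (UNIV - F)"
          by (subst infsum_Un_disjoint) (use fF dsF in auto)
        finally show ?thesis by simp
      qed
      also have "\<dots> \<le> e" using H by (auto simp: dist_real_def abs_less_iff)
      finally show "norm (infsum (\<lambda>m. d m * E m x) UNIV - sum (\<lambda>m. d m * E m x) F) \<le> e"
        using eq by simp
    qed
  qed
qed



lemma swap_integral:
  fixes d :: "int \<Rightarrow> complex" and E :: "int \<Rightarrow> real \<Rightarrow> complex"
    and f G :: "real \<Rightarrow> complex"
  assumes ds: "(\<lambda>m. norm (d m)) summable_on UNIV"
    and E1: "\<And>m x. x \<in> X \<Longrightarrow> norm (E m x) \<le> 1"
    and Em: "\<And>m. E m \<in> borel_measurable lborel"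
    and fi: "integrable lborel f" and f0: "\<And>x. x \<notin> X \<Longrightarrow> f x = 0"
    and G: "\<And>x. x \<in> X \<Longrightarrow> ((\<lambda>m. d m * E m x) has_sum G x) UNIV"
    and Gm: "G \<in> borel_measurable lborel"
  shows "((\<lambda>m. LINT x|lborel. f x * (d m * E m x)) has_sum (LINT x|lborel. f x * G x)) UNIV"
proof -
  note tu = tail_uniform[of d X E, OF ds E1]
  define D where "D = infsum (\<lambda>m. norm (d m)) UNIV"
  have fm: "f \<in> borel_measurable lborel" using fi by (rule borel_measurable_integrable)
  have Gb: "norm (G x) \<le> D" if x: "x \<in> X" for x
  proof -
    have abs: "(\<lambda>m. norm (d m * E m x)) summable_on UNIV"
      by (rule summable_on_comparison_test[OF ds]) (use E1[OF x] in \<open>auto simp: norm_mult intro: mult_left_le\<close>)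
    have "G x = infsum (\<lambda>m. d m * E m x) UNIV" using G[OF x] by (simp add: infsumI)
    also have "norm \<dots> \<le> infsum (\<lambda>m. norm (d m * E m x)) UNIV"
      by (rule norm_infsum_bound) (use abs in auto)
    also have "\<dots> \<le> D" unfolding D_def
      by (rule infsum_mono) (use abs ds E1[OF x] in \<open>auto simp: norm_mult intro: mult_left_le\<close>)
    finally show ?thesis .
  qed
  have int_m: "integrable lborel (\<lambda>x. f x * (d m * E m x))" for m
  proof (rule Bochner_Integration.integrable_bound[where f="\<lambda>x. norm (d m) *\<^sub>R f x"])
    show "integrable lborel (\<lambda>x. norm (d m) *\<^sub>R f x)" using fi by simp
    show "(\<lambda>x. f x * (d m * E m x)) \<in> borel_measurable lborel" using fm Em by measurable
    show "AE x in lborel. norm (f x * (d m * E m x)) \<le> norm (norm (d m) *\<^sub>R f x)"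
    proof (rule AE_I2)
      fix x show "norm (f x * (d m * E m x)) \<le> norm (norm (d m) *\<^sub>R f x)"
      proof (cases "x \<in> X")
        case True 
        have "norm (d m) * norm (E m x) \<le> norm (d m)" using E1[OF True] by (simp add: mult_left_le)
        then have "norm (f x) * (norm (d m) * norm (E m x)) \<le> norm (f x) * norm (d m)"
          by (simp add: mult_left_mono)
        then show ?thesis by (simp add: norm_mult mult.commute)
      qed (simp add: f0)
    qed
  qed
  have int_G: "integrable lborel (\<lambda>x. f x * G x)"
  proof (rule Bochner_Integration.integrable_bound[where f="\<lambda>x. D *\<^sub>R f x"])
    show "integrable lborel (\<lambda>x. D *\<^sub>R f x)" using fi by simp
    show "(\<lambda>x. f x * G x) \<in> borel_measurable lborel" using fm Gm by measurable
    show "AE x in lborel. norm (f x * G x) \<le> norm (D *\<^sub>R f x)"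
    proof (rule AE_I2)
      fix x show "norm (f x * G x) \<le> norm (D *\<^sub>R f x)"
      proof (cases "x \<in> X")
        case True 
        have "D \<ge> 0" using Gb[OF True] norm_ge_zero order_trans by blast
        then show ?thesis using Gb[OF True]
          by (simp add: norm_mult) (metis mult.commute mult_right_mono norm_ge_zero)
      qed (simp add: f0)
    qed
  qed
  define K where "K = (LINT x|lborel. norm (f x)) + 1"
  have K: "K > 0" unfolding K_def by (smt (verit) integral_nonneg_AE norm_ge_zero AE_I2)
  show ?thesis unfolding has_sum_def
  proof (rule tendstoI)
    fix e :: real assume e: "e > 0"
    have e2: "e / (2 * K) > 0" using e K by simp
    show "\<forall>\<^sub>F F in finite_subsets_at_top UNIV.
            dist (sum (\<lambda>m. LINT x|lborel. f x * (d m * E m x)) F) (LINT x|lborel. f x * G x) < e"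
    proof (rule eventually_mono[OF eventually_conj[OF tu(2)[OF _ e2, simplified] eventually_finite_subsets_at_top_weakI]])
      fix F :: "int set"
      assume H: "(\<forall>x\<in>X. norm (infsum (\<lambda>m. d m * E m x) UNIV - sum (\<lambda>m. d m * E m x) F) \<le> e / (2 * K)) \<and> finite F"
      have "sum (\<lambda>m. LINT x|lborel. f x * (d m * E m x)) F = (LINT x|lborel. (\<Sum>m\<in>F. f x * (d m * E m x)))"
        by (rule Bochner_Integration.integral_sum[symmetric]) (use int_m in auto)
      also have "\<dots> = (LINT x|lborel. f x * (\<Sum>m\<in>F. d m * E m x))"
        by (simp add: sum_distrib_left)
      finally have eq1: "sum (\<lambda>m. LINT x|lborel. f x * (d m * E m x)) F = (LINT x|lborel. f x * (\<Sum>m\<in>F. d m * E m x))" .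
      have intS: "integrable lborel (\<lambda>x. f x * (\<Sum>m\<in>F. d m * E m x))"
        using Bochner_Integration.integrable_sum[of F lborel "\<lambda>m x. f x * (d m * E m x)", OF int_m]
        by (simp add: sum_distrib_left)
      have "dist (sum (\<lambda>m. LINT x|lborel. f x * (d m * E m x)) F) (LINT x|lborel. f x * G x)
           = norm (LINT x|lborel. f x * (G x - (\<Sum>m\<in>F. d m * E m x)))"
        using intS int_G by (simp add: eq1 dist_norm norm_minus_commute right_diff_distrib)
      also have "\<dots> \<le> (LINT x|lborel. norm (f x * (G x - (\<Sum>m\<in>F. d m * E m x))))"
        by (rule integral_norm_bound)
      also have "\<dots> \<le> (LINT x|lborel. e / (2 * K) * norm (f x))"
      proof (rule integral_mono)
        show "integrable lborel (\<lambda>x. norm (f x * (G x - (\<Sum>m\<in>F. d m * E m x))))"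
          using intS int_G by (simp add: right_diff_distrib)
        show "integrable lborel (\<lambda>x. e / (2 * K) * norm (f x))" using fi by simp
        fix x show "norm (f x * (G x - (\<Sum>m\<in>F. d m * E m x))) \<le> e / (2 * K) * norm (f x)"
        proof (cases "x \<in> X")
          case True
          have "G x = infsum (\<lambda>m. d m * E m x) UNIV" using G[OF True] by (simp add: infsumI)
          then have "norm (G x - (\<Sum>m\<in>F. d m * E m x)) \<le> e / (2 * K)" using H True by auto
          then have "norm (f x) * norm (G x - (\<Sum>m\<in>F. d m * E m x)) \<le> norm (f x) * (e / (2 * K))"
            by (rule mult_left_mono) auto
          then show ?thesis by (simp add: norm_mult mult.commute)
        qed (simp add: f0)
      qed
      also have "\<dots> = e / (2 * K) * (LINT x|lborel. norm (f x))" by simp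
      also have "\<dots> < e"
      proof -
        have "(LINT x|lborel. norm (f x)) < K" unfolding K_def by simp
        then have "e / (2 * K) * (LINT x|lborel. norm (f x)) \<le> e / (2 * K) * K"
          using e2 by (intro mult_left_mono) auto
        also have "\<dots> = e / 2" using K by simp
        finally show ?thesis using e by linarith
      qed
      finally show "dist (sum (\<lambda>m. LINT x|lborel. f x * (d m * E m x)) F) (LINT x|lborel. f x * G x) < e" .
    qed
  qed
qed



definition ef :: "real \<Rightarrow> int \<Rightarrow> real \<Rightarrow> complex" where
  "ef L k x = cis (2 * pi * of_int k * x / L)"

lemma cis_vd:
  "((\<lambda>x. cis (w * x)) has_vector_derivative (\<i> * of_real w * cis (w * x))) (at x within S)"
proof -
  have "((\<lambda>x. w * x) has_derivative (\<lambda>t. w * t)) (at x within S)"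
    by (auto intro!: derivative_eq_intros)
  from has_derivative_cis[OF this]
  have "((\<lambda>x. cis (w * x)) has_derivative (\<lambda>t. (w * t) *\<^sub>R (\<i> * cis (w * x)))) (at x within S)" .
  moreover have "(\<lambda>t. (w * t) *\<^sub>R (\<i> * cis (w * x))) = (\<lambda>t. t *\<^sub>R (\<i> * of_real w * cis (w * x)))"
    by (auto simp: scaleR_conv_of_real)
  ultimately show ?thesis by (simp add: has_vector_derivative_def)
qed

lemma ef_alt: "ef L k x = cis ((2 * pi * of_int k / L) * x)"
  by (simp add: ef_def)

lemma ef_vd:
  "(ef L k has_vector_derivative (\<i> * of_real (2 * pi * of_int k / L) * ef L k x)) (at x within S)"
  unfolding ef_alt[abs_def] ef_alt by (rule cis_vd)

lemma ef_0 [simp]: "ef L k 0 = 1" by (simp add: ef_def)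
lemma ef_L [simp]: "L \<noteq> 0 \<Longrightarrow> ef L k L = 1"
proof -
  assume L: "L \<noteq> 0"
  have "2 * pi * of_int k * L / L = 2 * pi * of_int k" using L by simp
  then show ?thesis unfolding ef_def by simp
qed

lemma continuous_on_ef [continuous_intros]: "continuous_on S (ef L k)"
  unfolding ef_alt[abs_def] by (intro continuous_intros)

lemma norm_ef [simp]: "norm (ef L k x) = 1" by (simp add: ef_def)



lemma ef_orth:
  assumes L: "L > 0"
  shows "(LINT x:{0..L}|lborel. ef L k x) = (if k = 0 then of_real L else 0)"
proof (cases "k = 0")
  case True
  then show ?thesis using L by (simp add: ef_def set_integral_const scaleR_conv_of_real)
next
  case False
  define w where "w = \<i> * of_real (2 * pi * of_int k / L)"
  have w0: "w \<noteq> 0" using False L by (simp add: w_def)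
  have "(LINT x:{0..L}|lborel. ef L k x) = ef L k L / w - ef L k 0 / w"
    unfolding set_lebesgue_integral_def
  proof (rule integral_FTC_atLeastAtMost)
    show "0 \<le> L" using L by simp
    fix x show "((\<lambda>x. ef L k x / w) has_vector_derivative ef L k x) (at x within {0..L})"
      using ef_vd[of L k x "{0..L}"] w0 unfolding w_def[symmetric]
      by (auto intro!: derivative_eq_intros)
  next
    show "continuous_on {0..L} (ef L k)" by (intro continuous_intros) 
  qed
  also have "\<dots> = 0" using L by simp
  finally show ?thesis using False by simp
qed



lemma set_integral_norm_bound':
  fixes f :: "real \<Rightarrow> complex"
  shows "norm (LINT x:A|lborel. f x) \<le> (LINT x:A|lborel. norm (f x))"
proof -
  have "norm (LINT x|lborel. indicator A x *\<^sub>R f x) \<le> (LINT x|lborel. norm (indicator A x *\<^sub>R f x))"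
    by (rule integral_norm_bound)
  also have "(\<lambda>x. norm (indicator A x *\<^sub>R f x)) = (\<lambda>x. indicator A x *\<^sub>R norm (f x))"
    by (auto simp: indicator_def)
  finally show ?thesis unfolding set_lebesgue_integral_def .
qed

lemma ibp_ef:
  fixes h h' :: "real \<Rightarrow> complex"
  assumes L: "L > 0"
    and hd: "\<And>x. x \<in> {0..L} \<Longrightarrow> (h has_vector_derivative h' x) (at x within {0..L})"
    and h'c: "continuous_on {0..L} h'"
    and hL: "h L = h 0"
  shows "(LINT x:{0..L}|lborel. h' x * ef L k x)
         = - (\<i> * of_real (2 * pi * of_int k / L)) * (LINT x:{0..L}|lborel. h x * ef L k x)"
proof -
  define w where "w = \<i> * of_real (2 * pi * of_int k / L)"
  have hc: "continuous_on {0..L} h" using hd continuous_on_vector_derivative by blast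
  have i1: "set_integrable lborel {0..L} (\<lambda>x. h' x * ef L k x)"
    by (rule borel_integrable_atLeastAtMost') (intro continuous_intros h'c)
  have i2: "set_integrable lborel {0..L} (\<lambda>x. w * (h x * ef L k x))"
    by (rule borel_integrable_atLeastAtMost') (intro continuous_intros hc)
  have "(LINT x:{0..L}|lborel. h' x * ef L k x + w * (h x * ef L k x)) = h L * ef L k L - h 0 * ef L k 0"
    unfolding set_lebesgue_integral_def
  proof (rule integral_FTC_atLeastAtMost)
    show "0 \<le> L" using L by simp
    fix x assume x: "0 \<le> x" "x \<le> L"
    have "((\<lambda>x. h x * ef L k x) has_vector_derivative (h x * (w * ef L k x) + h' x * ef L k x)) (at x within {0..L})"
      by (rule has_vector_derivative_mult[OF hd ef_vd[of L k x, folded w_def]]) (use x in auto)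
    then show "((\<lambda>x. h x * ef L k x) has_vector_derivative h' x * ef L k x + w * (h x * ef L k x)) (at x within {0..L})"
      by (simp add: algebra_simps)
  next
    show "continuous_on {0..L} (\<lambda>x. h' x * ef L k x + w * (h x * ef L k x))"
      by (intro continuous_intros h'c hc)
  qed
  also have "\<dots> = 0" using L hL by simp
  finally have "(LINT x:{0..L}|lborel. h' x * ef L k x) + (LINT x:{0..L}|lborel. w * (h x * ef L k x)) = 0"
    using set_integral_add(2)[OF i1 i2] by simp
  then show ?thesis unfolding w_def[symmetric] by (simp add: eq_neg_iff_add_eq_0)
qed



lemma summable_nat_inv_sq: "summable (\<lambda>n::nat. 1 / (1 + real n ^ 2))"
proof (rule summable_comparison_test'[where N=1])
  show "summable (\<lambda>n::nat. inverse (real n ^ 2))"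
    by (rule inverse_power_summable) auto
  fix n :: nat assume "n \<ge> 1"
  then show "norm (1 / (1 + real n ^ 2)) \<le> inverse (real n ^ 2)"
    by (simp add: divide_simps) (smt (verit) zero_le_power2)
qed

lemma summable_int_inv_sq: "(\<lambda>k::int. 1 / (1 + real_of_int k ^ 2)) summable_on UNIV"
proof -
  let ?g = "\<lambda>k::int. 1 / (1 + real_of_int k ^ 2)"
  have A: "?g summable_on (int ` UNIV)"
  proof (subst summable_on_reindex)
    show "inj_on int UNIV" by simp
    show "(?g \<circ> int) summable_on UNIV"
      using summable_nat_inv_sq by (subst summable_on_UNIV_nonneg_real_iff) (auto simp: o_def)
  qed
  have B: "?g summable_on ((\<lambda>n. - int n - 1) ` UNIV)"
  proof (subst summable_on_reindex)
    show "inj_on (\<lambda>n. - int n - 1) UNIV" by (auto simp: inj_on_def)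
    have "summable (\<lambda>n. ?g (- int n - 1))"
    proof (rule summable_comparison_test'[where N=0, OF summable_nat_inv_sq])
      fix n :: nat
      have "real n ^ 2 \<le> (- real n - 1) ^ 2" by (simp add: power2_eq_square algebra_simps)
      then show "norm (?g (- int n - 1)) \<le> 1 / (1 + real n ^ 2)"
        by (auto intro!: divide_left_mono mult_pos_pos simp: add_pos_nonneg)
    qed
    then show "(?g \<circ> (\<lambda>n. - int n - 1)) summable_on UNIV"
      by (subst summable_on_UNIV_nonneg_real_iff) (auto simp: o_def)
  qed
  have U: "UNIV = int ` UNIV \<union> (\<lambda>n. - int n - 1) ` UNIV"
  proof -
    have "k \<in> int ` UNIV \<union> (\<lambda>n. - int n - 1) ` UNIV" for k :: int
    proof (cases "k \<ge> 0")
      case True then show ?thesis by (metis UnI1 nonneg_int_cases rangeI)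
    next
      case False
      then have "k = - int (nat (- k - 1)) - 1" by simp
      then show ?thesis by blast
    qed
    then show ?thesis by blast
  qed
  have "?g summable_on (int ` UNIV \<union> (\<lambda>n. - int n - 1) ` UNIV)"
    by (rule summable_on_Un_disjoint[OF A B]) auto
  then show ?thesis using U by simp
qed



lemma coeff_summable:
  fixes h h1 h2 :: "real \<Rightarrow> complex"
  assumes L: "L > 0"
    and hd: "\<And>x. (h has_vector_derivative h1 x) (at x)"
    and h1d: "\<And>x. (h1 has_vector_derivative h2 x) (at x)"
    and h2c: "continuous_on {0..L} h2"
    and hL: "h L = h 0" and h1L: "h1 L = h1 0"
  shows "(\<lambda>k. norm (LINT x:{0..L}|lborel. h x * ef L k x)) summable_on UNIV"
proof -
  define I where "I k = (LINT x:{0..L}|lborel. h x * ef L k x)" for k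
  define I2 where "I2 k = (LINT x:{0..L}|lborel. h2 x * ef L k x)" for k
  define N0 where "N0 = (LINT x:{0..L}|lborel. norm (h x))"
  define N2 where "N2 = (LINT x:{0..L}|lborel. norm (h2 x))"
  define M where "M = N0 + 2 * (L / (2 * pi))^2 * N2"
  have h1c: "continuous_on {0..L} h1"
    by (rule continuous_on_vector_derivative) (use h1d has_vector_derivative_at_within in blast)
  have N2: "N2 \<ge> 0" unfolding N2_def unfolding set_lebesgue_integral_def by (rule integral_nonneg_AE) (auto simp: indicator_def)
  have N0: "N0 \<ge> 0" unfolding N0_def unfolding set_lebesgue_integral_def by (rule integral_nonneg_AE) (auto simp: indicator_def)
  have bI: "norm (I k) \<le> N0" for k
    using set_integral_norm_bound'[of "{0..L}" "\<lambda>x. h x * ef L k x"]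
    unfolding I_def N0_def by (simp add: norm_mult)
  have bI2: "norm (I2 k) \<le> N2" for k
    using set_integral_norm_bound'[of "{0..L}" "\<lambda>x. h2 x * ef L k x"]
    unfolding I2_def N2_def by (simp add: norm_mult)
  have e1: "(LINT x:{0..L}|lborel. h1 x * ef L k x) = - (\<i> * of_real (2 * pi * of_int k / L)) * I k" for k
    unfolding I_def
    by (rule ibp_ef[OF L _ h1c hL]) (use hd has_vector_derivative_at_within in blast)
  have e2: "I2 k = - (\<i> * of_real (2 * pi * of_int k / L)) * (LINT x:{0..L}|lborel. h1 x * ef L k x)" for k
    unfolding I2_def
    by (rule ibp_ef[OF L _ h2c h1L]) (use h1d has_vector_derivative_at_within in blast)
  have main: "norm (I k) \<le> M / (1 + real_of_int k ^ 2)" for k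
  proof (cases "k = 0")
    case True
    have "0 \<le> 2 * (L / (2 * pi))^2 * N2" using N2 by simp
    then show ?thesis using bI[of k] unfolding M_def True by (simp add: mult.commute mult.left_commute)
  next
    case False
    define a where "a = 2 * pi * real_of_int k / L"
    have a0: "a \<noteq> 0" using False L by (simp add: a_def)
    have I2e: "I2 k = - of_real (a^2) * I k"
      using e1[of k] e2[of k] unfolding a_def[symmetric]
      by (simp add: power2_eq_square algebra_simps)
    have a2: "a^2 > 0" using a0 by simp
    have "norm (I2 k) = norm (of_real (a^2) * I k)" using I2e by (simp only: norm_minus_cancel mult_minus_left)
    also have "\<dots> = a^2 * norm (I k)" by (simp only: norm_mult norm_of_real abs_of_pos[OF a2])
    finally have "a^2 * norm (I k) \<le> N2" using bI2[of k] by simp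
    then have nI: "norm (I k) \<le> N2 / a^2" using a2 by (simp add: pos_le_divide_eq mult.commute)
    have k1: "real_of_int k ^ 2 \<ge> 1" using False
      by (smt (verit) of_int_1_le_iff of_int_power power2_less_eq_zero_iff)
    have "a^2 = (2*pi/L)^2 * real_of_int k ^ 2" unfolding a_def by (simp add: power_mult_distrib power_divide)
    then have "N2 / a^2 = (L / (2*pi))^2 * N2 / real_of_int k ^ 2"
      using L by (simp add: power_divide)
    also have "\<dots> \<le> 2 * (L / (2*pi))^2 * N2 / (1 + real_of_int k ^ 2)"
    proof -
      have c: "0 \<le> (L / (2*pi))^2 * N2" using N2 by simp
      have "1 / real_of_int k ^ 2 \<le> 2 / (1 + real_of_int k ^ 2)"
        using k1 by (simp add: divide_simps)
      from mult_left_mono[OF this c] show ?thesis by (simp add: mult.commute mult.left_commute)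
    qed
    also have "\<dots> \<le> M / (1 + real_of_int k ^ 2)"
      unfolding M_def using N0 by (intro divide_right_mono) auto
    finally show ?thesis using nI by linarith
  qed
  have "(\<lambda>k::int. M * (1 / (1 + real_of_int k ^ 2))) summable_on UNIV"
    by (rule summable_on_cmult_right[OF summable_int_inv_sq])
  then show ?thesis
    by (rule summable_on_comparison_test) (use main in \<open>auto simp: I_def\<close>)
qed



definition tp_eval :: "real \<Rightarrow> (complex \<times> int) list \<Rightarrow> real \<Rightarrow> complex" where
  "tp_eval L xs x = sum_list (map (\<lambda>(a, k). a * ef L k x) xs)"

lemma ef_mult: "ef L k x * ef L l x = ef L (k + l) x"
  unfolding ef_def by (simp add: cis_mult distrib_left distrib_right add_divide_distrib)

lemma tp_eval_Nil [simp]: "tp_eval L [] x = 0" by (simp add: tp_eval_def)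
lemma tp_eval_Cons [simp]: "tp_eval L ((a,k) # xs) x = a * ef L k x + tp_eval L xs x"
  by (simp add: tp_eval_def)
lemma tp_eval_append [simp]: "tp_eval L (xs @ ys) x = tp_eval L xs x + tp_eval L ys x"
  by (simp add: tp_eval_def)

lemma tp_eval_mult1:
  "(a * ef L k x) * tp_eval L ys x = tp_eval L (map (\<lambda>(b, l). (a * b, k + l)) ys) x"
proof (induction ys)
  case Nil then show ?case by simp
next
  case (Cons y ys) then show ?case
    by (cases y) (simp add: algebra_simps flip: ef_mult)
qed

lemma tp_eval_mult:
  "tp_eval L xs x * tp_eval L ys x
    = tp_eval L (concat (map (\<lambda>(a, k). map (\<lambda>(b, l). (a * b, k + l)) ys) xs)) x"
proof (induction xs)
  case Nil then show ?case by simp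
next
  case (Cons p xs) then show ?case
    by (cases p) (simp add: algebra_simps tp_eval_mult1[symmetric])
qed

lemma Re_ef: "complex_of_real (Re (ef L 1 x)) = (ef L 1 x + ef L (-1) x) / 2"
  by (simp add: ef_def complex_eq_iff cis.sel)

lemma Im_ef: "complex_of_real (Im (ef L 1 x)) = (ef L 1 x - ef L (-1) x) / (2 * \<i>)"
  by (simp add: ef_def complex_eq_iff cis.sel)

lemma poly_tp:
  fixes P :: "complex \<Rightarrow> real"
  assumes "real_polynomial_function P"
  shows "\<exists>xs. \<forall>x. complex_of_real (P (ef L 1 x)) = tp_eval L xs x"
  using assms
proof (induction P rule: real_polynomial_function.induct)
  case (linear f)
  have fz: "f z = Re z * f 1 + Im z * f \<i>" for z
  proof -
    have "z = Re z *\<^sub>R 1 + Im z *\<^sub>R \<i>" by (simp add: complex_eq_iff)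
    then have "f z = f (Re z *\<^sub>R 1 + Im z *\<^sub>R \<i>)" by simp
    also have "\<dots> = Re z * f 1 + Im z * f \<i>"
      using linear.hyps[THEN bounded_linear.linear] by (simp add: linear_add linear_scale)
    finally show ?thesis .
  qed
  show ?case
  proof (intro exI allI)
    fix x
    show "complex_of_real (f (ef L 1 x)) =
      tp_eval L [(of_real (f 1) / 2 + of_real (f \<i>) / (2 * \<i>), 1), (of_real (f 1) / 2 - of_real (f \<i>) / (2 * \<i>), -1)] x"
      unfolding fz[of "ef L 1 x"] of_real_add of_real_mult Re_ef Im_ef
      by (simp add: field_simps)
  qed
next
  case (const c)
  show ?case by (rule exI[of _ "[(of_real c, 0)]"]) (simp add: ef_def)
next
  case (add f g)
  then obtain xs ys where "\<forall>x. complex_of_real (f (ef L 1 x)) = tp_eval L xs x"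
    "\<forall>x. complex_of_real (g (ef L 1 x)) = tp_eval L ys x" by blast
  then show ?case by (intro exI[of _ "xs @ ys"]) simp
next
  case (mult f g)
  then obtain xs ys where "\<forall>x. complex_of_real (f (ef L 1 x)) = tp_eval L xs x"
    "\<forall>x. complex_of_real (g (ef L 1 x)) = tp_eval L ys x" by blast
  then show ?case
    by (intro exI[of _ "concat (map (\<lambda>(a, k). map (\<lambda>(b, l). (a * b, k + l)) ys) xs)"])
       (simp add: tp_eval_mult[symmetric])
qed

lemma continuous_on_tp_eval [continuous_intros]: "continuous_on S (tp_eval L xs)"
  unfolding tp_eval_def
  by (induction xs) (auto intro!: continuous_intros)

lemma tp_integral_zero:
  fixes w :: "real \<Rightarrow> real"
  assumes wc: "continuous_on {0..L} w"
    and coef: "\<And>k. (LINT x:{0..L}|lborel. of_real (w x) * ef L k x) = 0"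
  shows "(LINT x:{0..L}|lborel. of_real (w x) * tp_eval L xs x) = 0"
proof (induction xs)
  case Nil then show ?case by simp
next
  case (Cons p xs)
  obtain a k where p: "p = (a, k)" by (cases p)
  have i1: "set_integrable lborel {0..L} (\<lambda>x. a * (of_real (w x) * ef L k x))"
    by (rule borel_integrable_atLeastAtMost') (intro continuous_intros wc)
  have i2: "set_integrable lborel {0..L} (\<lambda>x. of_real (w x) * tp_eval L xs x)"
    by (rule borel_integrable_atLeastAtMost') (intro continuous_intros wc)
  have "(LINT x:{0..L}|lborel. of_real (w x) * tp_eval L (p # xs) x)
      = (LINT x:{0..L}|lborel. a * (of_real (w x) * ef L k x) + of_real (w x) * tp_eval L xs x)"
    by (simp add: p algebra_simps)
  also have "\<dots> = a * (LINT x:{0..L}|lborel. of_real (w x) * ef L k x) + (LINT x:{0..L}|lborel. of_real (w x) * tp_eval L xs x)"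
    using set_integral_add(2)[OF i1 i2] by simp
  also have "\<dots> = 0" using coef Cons.IH by simp
  finally show ?case .
qed



lemma ef1_surj:
  assumes L: "L > 0"
  shows "ef L 1 ` {0..L} = sphere (0::complex) 1"
proof
  show "ef L 1 ` {0..L} \<subseteq> sphere 0 1" by (auto simp: ef_def)
  show "sphere 0 1 \<subseteq> ef L 1 ` {0..L}"
  proof
    fix z :: complex assume z: "z \<in> sphere 0 1"
    then have z0: "z \<noteq> 0" and nz: "norm z = 1" by auto
    have sz: "sgn z = z" using nz by (simp add: sgn_div_norm)
    define \<theta> where "\<theta> = Arg z"
    have cz: "cis \<theta> = z" using cis_Arg[OF z0] sz by (simp add: \<theta>_def)
    have tb: "- pi < \<theta>" "\<theta> \<le> pi" using Arg_bounded[of z] by (auto simp: \<theta>_def)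
    show "z \<in> ef L 1 ` {0..L}"
    proof (cases "\<theta> \<ge> 0")
      case True
      define x where "x = L * \<theta> / (2 * pi)"
      have "x \<in> {0..L}" using True tb L unfolding x_def by (auto simp: field_simps)
      moreover have "ef L 1 x = z" unfolding ef_def x_def using L cz by (simp add: field_simps)
      ultimately show ?thesis by force
    next
      case False
      define x where "x = L * (\<theta> + 2 * pi) / (2 * pi)"
      have a: "0 \<le> (\<theta> + 2 * pi) / (2 * pi)" "(\<theta> + 2 * pi) / (2 * pi) \<le> 1"
        using False tb pi_gt_zero by (auto simp: field_simps)
      have xe: "x = L * ((\<theta> + 2 * pi) / (2 * pi))" unfolding x_def by simp
      have "0 \<le> L * ((\<theta> + 2 * pi) / (2 * pi))" using a L by (intro mult_nonneg_nonneg) auto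
      moreover have "L * ((\<theta> + 2 * pi) / (2 * pi)) \<le> L" using a L by (intro mult_left_le) auto
      ultimately have "x \<in> {0..L}" unfolding xe by simp
      moreover have "ef L 1 x = cis (\<theta> + 2 * pi)"
      proof -
        have "2 * pi * real_of_int 1 * x / L = 2 * pi * ((\<theta> + 2 * pi) / (2 * pi))" using xe L by simp
        also have "\<dots> = \<theta> + 2 * pi" by simp
        finally show ?thesis unfolding ef_def by simp
      qed
      moreover have "cis (\<theta> + 2 * pi) = z" using cz by (simp add: cis_mult[symmetric])
      ultimately show ?thesis by force
    qed
  qed
qed

lemma ef1_fiber:
  assumes L: "L > 0" and x: "x \<in> {0..L}" and y: "y \<in> {0..L}" and e: "ef L 1 x = ef L 1 y"
  shows "x = y \<or> (x = 0 \<and> y = L) \<or> (x = L \<and> y = 0)"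
proof -
  have "sin (2 * pi * x / L) = sin (2 * pi * y / L) \<and> cos (2 * pi * x / L) = cos (2 * pi * y / L)"
    using e unfolding ef_def by (simp add: complex_eq_iff)
  then obtain n :: int where n: "2 * pi * x / L = 2 * pi * y / L + 2 * pi * n"
    using sin_cos_eq_iff by blast
  then have "2 * pi * (x - y - n * L) / L = 0" using L by (simp add: field_simps)
  then have "x = y + n * L" using L by simp
  moreover have "n \<le> 1" "n \<ge> -1"
  proof -
    from \<open>x = y + n * L\<close> have xy: "x - y = n * L" by simp
    show "n \<le> 1"
    proof (rule ccontr)
      assume "\<not> n \<le> 1" then have "real_of_int n \<ge> 2" by simp
      then have nL: "n * L \<ge> 2 * L" using L by (intro mult_right_mono) auto
      show False using nL xy x y L by (simp only: atLeastAtMost_iff) linarith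
    qed
    show "n \<ge> -1"
    proof (rule ccontr)
      assume "\<not> n \<ge> -1" then have "real_of_int n \<le> -2" by simp
      then have nL: "n * L \<le> -2 * L" using L by (intro mult_right_mono) auto
      show False using nL xy x y L by (simp only: atLeastAtMost_iff) linarith
    qed
  qed
  ultimately have "n = 0 \<or> n = 1 \<or> n = -1" by linarith
  then show ?thesis using \<open>x = y + n * L\<close> x y by auto
qed

lemma circle_lift:
  fixes w :: "real \<Rightarrow> real"
  assumes L: "L > 0" and wc: "continuous_on {0..L} w" and wL: "w L = w 0"
  obtains F where "continuous_on (sphere (0::complex) 1) F" "\<And>x. x \<in> {0..L} \<Longrightarrow> F (ef L 1 x) = w x"
proof -
  let ?X = "top_of_set {0..L::real}" and ?Y = "top_of_set (sphere (0::complex) 1)"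
  have q: "quotient_map ?X ?Y (ef L 1)"
  proof (rule continuous_imp_quotient_map)
    show "continuous_map ?X ?Y (ef L 1)"
      using ef1_surj[OF L] by (auto intro!: continuous_intros)
    show "compact_space ?X" by (rule compact_space_subtopology) simp
    show "Hausdorff_space ?Y" by (rule Hausdorff_space_subtopology) simp
    show "ef L 1 ` topspace ?X = topspace ?Y" using ef1_surj[OF L] by simp
  qed
  have h: "continuous_map ?X euclideanreal w" using wc by simp
  obtain g where g: "continuous_map ?Y euclideanreal g" "\<And>x. x \<in> topspace ?X \<Longrightarrow> g (ef L 1 x) = w x"
  proof (rule quotient_map_lift_exists[OF q h])
    fix x y assume "x \<in> topspace ?X" "y \<in> topspace ?X" "ef L 1 x = ef L 1 y"
    then show "w x = w y" using ef1_fiber[OF L, of x y] wL by auto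
  qed blast
  show ?thesis
  proof (rule that)
    show "continuous_on (sphere 0 1) g" using g(1) by simp
    fix x :: real assume "x \<in> {0..L}" then show "g (ef L 1 x) = w x" using g(2) by simp
  qed
qed



lemma uniq_real:
  fixes w :: "real \<Rightarrow> real"
  assumes L: "L > 0" and wc: "continuous_on {0..L} w" and wL: "w L = w 0"
    and coef: "\<And>k. (LINT x:{0..L}|lborel. of_real (w x) * ef L k x) = 0"
    and x: "x \<in> {0..L}"
  shows "w x = 0"
proof -
  obtain F where Fc: "continuous_on (sphere (0::complex) 1) F"
    and Fw: "\<And>x. x \<in> {0..L} \<Longrightarrow> F (ef L 1 x) = w x"
    using circle_lift[OF L wc wL] by blast
  have "compact (w ` {0..L})" by (rule compact_continuous_image[OF wc]) simp
  then obtain Mw where Mw: "Mw > 0" "\<And>x. x \<in> {0..L} \<Longrightarrow> norm (w x) \<le> Mw"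
    using compact_imp_bounded bounded_pos by (metis image_eqI)
  have w2i: "set_integrable lborel {0..L} (\<lambda>x. (w x)^2)"
    by (rule borel_integrable_atLeastAtMost') (intro continuous_intros wc)
  have bound: "(LINT x:{0..L}|lborel. (w x)^2) \<le> e * (Mw * L)" if e: "e > 0" for e
  proof -
    obtain P where P: "real_polynomial_function P" "\<And>z. z \<in> sphere 0 1 \<Longrightarrow> \<bar>F z - P z\<bar> < e"
      using Stone_Weierstrass_real_polynomial_function[OF compact_sphere Fc e] by blast
    have Pc: "continuous_on S P" for S
      using continuous_real_polymonial_function[OF P(1)] continuous_at_imp_continuous_on by blast
    have PEc: "continuous_on {0..L} (\<lambda>x. P (ef L 1 x))"
      by (rule continuous_on_compose2[OF Pc continuous_on_ef]) auto
    obtain xs where xs: "\<And>x. complex_of_real (P (ef L 1 x)) = tp_eval L xs x"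
      using poly_tp[OF P(1), of L] by blast
    have i1: "set_integrable lborel {0..L} (\<lambda>x. w x * (w x - P (ef L 1 x)))"
      by (rule borel_integrable_atLeastAtMost') (intro continuous_intros wc PEc)
    have i2: "set_integrable lborel {0..L} (\<lambda>x. w x * P (ef L 1 x))"
      by (rule borel_integrable_atLeastAtMost') (intro continuous_intros wc PEc)
    have z: "(LINT x:{0..L}|lborel. w x * P (ef L 1 x)) = 0"
    proof -
      have "complex_of_real (LINT x:{0..L}|lborel. w x * P (ef L 1 x))
          = (LINT x:{0..L}|lborel. complex_of_real (w x * P (ef L 1 x)))"
        by (rule set_integral_complex_of_real[symmetric])
      also have "\<dots> = (LINT x:{0..L}|lborel. of_real (w x) * tp_eval L xs x)"
        by (simp add: xs[symmetric])
      also have "\<dots> = 0" by (rule tp_integral_zero[OF wc coef])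
      finally show ?thesis by simp
    qed
    have "(LINT x:{0..L}|lborel. (w x)^2)
        = (LINT x:{0..L}|lborel. w x * (w x - P (ef L 1 x)) + w x * P (ef L 1 x))"
      by (simp add: power2_eq_square algebra_simps)
    also have "\<dots> = (LINT x:{0..L}|lborel. w x * (w x - P (ef L 1 x)))"
      using set_integral_add(2)[OF i1 i2] z by simp
    also have "\<dots> \<le> (LINT x:{0..L}|lborel. Mw * e)"
    proof (rule set_integral_mono[OF i1])
      show "set_integrable lborel {0..L} (\<lambda>x. Mw * e)"
        by (rule borel_integrable_atLeastAtMost') (intro continuous_intros)
      fix x assume x: "x \<in> {0..L}"
      have "\<bar>w x - P (ef L 1 x)\<bar> \<le> e"
        using P(2)[of "ef L 1 x"] Fw[OF x] by (simp add: ef_def)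
      then have "\<bar>w x\<bar> * \<bar>w x - P (ef L 1 x)\<bar> \<le> Mw * e"
        using Mw(2)[OF x] by (intro mult_mono) auto
      then show "w x * (w x - P (ef L 1 x)) \<le> Mw * e"
        by (simp add: abs_mult[symmetric])
    qed
    also have "\<dots> = e * (Mw * L)" using L by (simp add: set_integral_const)
    finally show ?thesis .
  qed
  have le0: "(LINT x:{0..L}|lborel. (w x)^2) \<le> 0"
  proof (rule field_le_epsilon)
    fix e :: real assume e: "e > 0"
    have "Mw * L > 0" using Mw L by simp
    then have "e / (Mw * L) > 0" using e by simp
    have "e / (Mw * L) * (Mw * L) = e" using Mw(1) L by simp
    with bound[OF \<open>e / (Mw * L) > 0\<close>] show "(LINT x:{0..L}|lborel. (w x)^2) \<le> 0 + e"
      by simp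
  qed
  have ge0: "(LINT x:{0..L}|lborel. (w x)^2) \<ge> 0"
    unfolding set_lebesgue_integral_def by (rule integral_nonneg_AE) (auto simp: indicator_def)
  have "integral {0..L} (\<lambda>x. (w x)^2) = 0"
    using set_borel_integral_eq_integral(2)[OF w2i] le0 ge0 by simp
  moreover have "(\<lambda>x. (w x)^2) integrable_on {0..L}"
    using set_borel_integral_eq_integral(1)[OF w2i] .
  ultimately have hi: "((\<lambda>x. (w x)^2) has_integral 0) (cbox 0 L)"
    by (metis box_real(2) has_integral_integral)
  have "(w x)^2 = 0"
  proof (rule has_integral_0_cbox_imp_0[OF _ _ hi])
    show "continuous_on (cbox 0 L) (\<lambda>x. (w x)^2)" by (simp add: continuous_intros wc)
    show "box 0 L \<noteq> {}" using L by simp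
    show "x \<in> cbox 0 L" using x by simp
  qed auto
  then show ?thesis by simp
qed



lemma set_integral_cnj':
  fixes f :: "real \<Rightarrow> complex"
  shows "(LINT x:A|lborel. cnj (f x)) = cnj (LINT x:A|lborel. f x)"
proof -
  have "(\<lambda>x. indicator A x *\<^sub>R cnj (f x)) = (\<lambda>x. cnj (indicator A x *\<^sub>R f x))"
    by (auto simp: indicator_def)
  moreover have "(LINT x|lborel. cnj (indicator A x *\<^sub>R f x)) = cnj (LINT x|lborel. indicator A x *\<^sub>R f x)"
    by (rule Bochner_Integration.integral_cnj)
  ultimately show ?thesis unfolding set_lebesgue_integral_def by simp
qed

lemma re_split: "complex_of_real (Re z) = (z + cnj z) / 2"
  by (simp add: complex_eq_iff)
lemma im_split: "complex_of_real (Im z) = (z - cnj z) / (2 * \<i>)"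
  by (simp add: complex_eq_iff)

lemma cnj_ef: "cnj (ef L k x) = ef L (- k) x"
  by (simp add: ef_def complex_eq_iff)

lemma uniq_complex:
  fixes u :: "real \<Rightarrow> complex"
  assumes L: "L > 0" and uc: "continuous_on {0..L} u" and uL: "u L = u 0"
    and coef: "\<And>k. (LINT x:{0..L}|lborel. u x * ef L k x) = 0"
    and x: "x \<in> {0..L}"
  shows "u x = 0"
proof -
  have cc: "(LINT x:{0..L}|lborel. cnj (u x) * ef L k x) = 0" for k
  proof -
    have "(LINT x:{0..L}|lborel. cnj (u x) * ef L k x) = (LINT x:{0..L}|lborel. cnj (u x * ef L (-k) x))"
      by (simp add: cnj_ef)
    also have "\<dots> = cnj (LINT x:{0..L}|lborel. u x * ef L (-k) x)" by (rule set_integral_cnj')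
    also have "\<dots> = 0" using coef by simp
    finally show ?thesis .
  qed
  have i1: "set_integrable lborel {0..L} (\<lambda>x. u x * ef L k x)" for k
    by (rule borel_integrable_atLeastAtMost') (intro continuous_intros uc)
  have i2: "set_integrable lborel {0..L} (\<lambda>x. cnj (u x) * ef L k x)" for k
    by (rule borel_integrable_atLeastAtMost') (intro continuous_intros uc)
  have re: "Re (u x) = 0"
  proof (rule uniq_real[OF L _ _ _ x])
    show "continuous_on {0..L} (\<lambda>x. Re (u x))" by (intro continuous_intros uc)
    show "Re (u L) = Re (u 0)" using uL by simp
    fix k
    have "(LINT x:{0..L}|lborel. of_real (Re (u x)) * ef L k x)
        = (LINT x:{0..L}|lborel. (1/2) * (u x * ef L k x + cnj (u x) * ef L k x))"
      by (rule set_lebesgue_integral_cong) (auto simp: re_split algebra_simps)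
    also have "\<dots> = (1/2) * ((LINT x:{0..L}|lborel. u x * ef L k x) + (LINT x:{0..L}|lborel. cnj (u x) * ef L k x))"
      using set_integral_add(2)[OF i1 i2] by simp
    also have "\<dots> = 0" using coef cc by simp
    finally show "(LINT x:{0..L}|lborel. of_real (Re (u x)) * ef L k x) = 0" .
  qed
  have im: "Im (u x) = 0"
  proof (rule uniq_real[OF L _ _ _ x])
    show "continuous_on {0..L} (\<lambda>x. Im (u x))" by (intro continuous_intros uc)
    show "Im (u L) = Im (u 0)" using uL by simp
    fix k
    have "(LINT x:{0..L}|lborel. of_real (Im (u x)) * ef L k x)
        = (LINT x:{0..L}|lborel. (1/(2*\<i>)) * (u x * ef L k x - cnj (u x) * ef L k x))"
      by (rule set_lebesgue_integral_cong) (auto simp: im_split field_simps)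
    also have "\<dots> = (1/(2*\<i>)) * (LINT x:{0..L}|lborel. u x * ef L k x - cnj (u x) * ef L k x)"
      by (rule set_integral_mult_right)
    also have "\<dots> = (1/(2*\<i>)) * ((LINT x:{0..L}|lborel. u x * ef L k x) - (LINT x:{0..L}|lborel. cnj (u x) * ef L k x))"
      by (simp only: set_integral_diff(2)[OF i1 i2])
    also have "\<dots> = 0" using coef cc by simp
    finally show "(LINT x:{0..L}|lborel. of_real (Im (u x)) * ef L k x) = 0" .
  qed
  show ?thesis using re im by (simp add: complex_eq_iff)
qed



lemma ef_measurable [measurable]: "ef L k \<in> borel_measurable lborel"
  by (simp add: borel_measurable_continuous_onI continuous_on_ef measurable_lborel1)

lemma fourier_inversion:
  fixes h :: "real \<Rightarrow> complex" and d :: "int \<Rightarrow> complex"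
  assumes L: "L > 0" and hc: "continuous_on {0..L} h" and hL: "h L = h 0"
    and d: "\<And>k. d k = (LINT x:{0..L}|lborel. h x * ef L k x) / of_real L"
    and ds: "(\<lambda>k. norm (d k)) summable_on UNIV"
    and x: "x \<in> {0..L}"
  shows "((\<lambda>k. d k * ef L (- k) x) has_sum h x) UNIV"
proof -
  define E where "E k y = ef L (- k) y" for k y
  have E1: "\<And>m y. y \<in> {0..L} \<Longrightarrow> norm (E m y) \<le> 1" by (simp add: E_def)
  note tu = tail_uniform[of d "{0..L}" E, OF ds E1]
  define g where "g y = infsum (\<lambda>k. d k * E k y) UNIV" for y
  have gs: "((\<lambda>k. d k * E k y) has_sum g y) UNIV" if "y \<in> {0..L}" for y
    using tu(1)[OF _ that] unfolding g_def by (simp add: summable_iff_has_sum_infsum)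
  have gc: "continuous_on {0..L} g"
  proof (rule uniform_limit_theorem[where F="finite_subsets_at_top UNIV"
        and f="\<lambda>F y. \<Sum>k\<in>F. d k * E k y"])
    show "\<forall>\<^sub>F F in finite_subsets_at_top UNIV. continuous_on {0..L} (\<lambda>y. \<Sum>k\<in>F. d k * E k y)"
      by (intro always_eventually allI continuous_intros) (simp add: E_def continuous_on_ef)
    show "uniform_limit {0..L} (\<lambda>F y. \<Sum>k\<in>F. d k * E k y) g (finite_subsets_at_top UNIV)"
    proof (rule uniform_limitI)
      fix e :: real assume e: "e > 0"
      have ev: "\<forall>\<^sub>F F in finite_subsets_at_top UNIV. \<forall>y\<in>{0..L}. norm (infsum (\<lambda>m. d m * E m y) UNIV - sum (\<lambda>m. d m * E m y) F) \<le> e / 2"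
        using tu(2)[of "e/2"] e by simp
      show "\<forall>\<^sub>F F in finite_subsets_at_top UNIV. \<forall>y\<in>{0..L}. dist (\<Sum>k\<in>F. d k * E k y) (g y) < e"
      proof (rule eventually_mono[OF ev])
        fix F :: "int set"
        assume H: "\<forall>y\<in>{0..L}. norm (infsum (\<lambda>m. d m * E m y) UNIV - sum (\<lambda>m. d m * E m y) F) \<le> e / 2"
        show "\<forall>y\<in>{0..L}. dist (\<Sum>k\<in>F. d k * E k y) (g y) < e"
        proof
          fix y assume y: "y \<in> {0..L}"
          have "norm (infsum (\<lambda>m. d m * E m y) UNIV - sum (\<lambda>m. d m * E m y) F) \<le> e / 2"
            using H y by blast
          then show "dist (\<Sum>k\<in>F. d k * E k y) (g y) < e"
            using e by (simp add: g_def dist_norm norm_minus_commute)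
        qed
      qed
    qed
    show "\<not> trivial_limit (finite_subsets_at_top (UNIV :: int set))" by simp
  qed
  have gL: "g L = g 0" unfolding g_def E_def using L by simp
  have coef: "(LINT y:{0..L}|lborel. g y * ef L k y) = of_real L * d k" for k
  proof -
    define f where "f y = indicator {0..L} y *\<^sub>R ef L k y" for y
    define G where "G y = indicator {0..L} y *\<^sub>R g y" for y
    have fi: "integrable lborel f"
      using borel_integrable_atLeastAtMost'[OF continuous_on_ef[of "{0..L}" L k]]
      unfolding set_integrable_def f_def .
    have Gm: "G \<in> borel_measurable lborel"
    proof -
      have "(\<lambda>y. indicator {0..L} y *\<^sub>R g y) \<in> borel_measurable borel"
        by (rule borel_measurable_continuous_on_indicator[OF _ gc]) simp
      then show ?thesis unfolding G_def by simp
    qed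
    have Em: "E m \<in> borel_measurable lborel" for m unfolding E_def by measurable
    have sw: "((\<lambda>m. LINT y|lborel. f y * (d m * E m y)) has_sum (LINT y|lborel. f y * G y)) UNIV"
    proof (rule swap_integral[OF ds E1 Em fi _ _ Gm])
      fix y :: real assume "y \<notin> {0..L}" then show "f y = 0" by (simp add: f_def)
    next
      fix y :: real assume "y \<in> {0..L}" then show "((\<lambda>m. d m * E m y) has_sum G y) UNIV"
        using gs by (simp add: G_def)
    qed
    have "(LINT y|lborel. f y * (d m * E m y)) = d m * (LINT y:{0..L}|lborel. ef L (k - m) y)" for m
    proof -
      have "(LINT y|lborel. f y * (d m * E m y)) = (LINT y:{0..L}|lborel. d m * ef L (k - m) y)"
        unfolding set_lebesgue_integral_def f_def E_def
        by (rule Bochner_Integration.integral_cong) (auto simp: indicator_def ef_mult algebra_simps)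
      then show ?thesis by simp
    qed
    then have "(LINT y|lborel. f y * (d m * E m y)) = (if m = k then of_real L * d k else 0)" for m
      using ef_orth[OF L, of "k - m"] by auto
    with sw have "((\<lambda>m. if m = k then of_real L * d k else 0) has_sum (LINT y|lborel. f y * G y)) UNIV"
      by simp
    moreover have "((\<lambda>m. if m = k then of_real L * d k else 0) has_sum (of_real L * d k)) UNIV"
    proof -
      have "((\<lambda>m. if m = k then of_real L * d k else 0) has_sum (of_real L * d k)) {k}"
        using has_sum_finite[of "{k}" "\<lambda>m. if m = k then of_real L * d k else 0"] by simp
      then show ?thesis by (rule has_sum_cong_neutral[THEN iffD1, rotated -1]) auto
    qed
    ultimately have "(LINT y|lborel. f y * G y) = of_real L * d k" by (rule has_sum_unique)
    moreover have "(LINT y|lborel. f y * G y) = (LINT y:{0..L}|lborel. g y * ef L k y)"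
      unfolding set_lebesgue_integral_def f_def G_def
      by (rule Bochner_Integration.integral_cong) (auto simp: indicator_def)
    ultimately show ?thesis by simp
  qed
  have "g x - h x = 0"
  proof (rule uniq_complex[OF L _ _ _ x])
    show "continuous_on {0..L} (\<lambda>x. g x - h x)" by (intro continuous_intros gc hc)
    show "g L - h L = g 0 - h 0" using gL hL by simp
    fix k
    have i1: "set_integrable lborel {0..L} (\<lambda>x. g x * ef L k x)"
      by (rule borel_integrable_atLeastAtMost') (intro continuous_intros gc)
    have i2: "set_integrable lborel {0..L} (\<lambda>x. h x * ef L k x)"
      by (rule borel_integrable_atLeastAtMost') (intro continuous_intros hc)
    have "(LINT x:{0..L}|lborel. (g x - h x) * ef L k x)
       = (LINT x:{0..L}|lborel. g x * ef L k x - h x * ef L k x)"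
      by (simp add: algebra_simps)
    also have "\<dots> = 0" using set_integral_diff(2)[OF i1 i2] coef[of k] d[of k] L by simp
    finally show "(LINT x:{0..L}|lborel. (g x - h x) * ef L k x) = 0" .
  qed
  then show ?thesis using gs[OF x] by (simp add: E_def)
qed



lemma test_fun_props:
  fixes \<phi> :: "real \<Rightarrow> real"
  assumes tf: "test_fun {0<..<B} \<phi>"
  shows tf_d1: "\<And>x. (\<phi> has_real_derivative deriv \<phi> x) (at x)"
    and tf_d2: "\<And>x. (deriv \<phi> has_real_derivative deriv (deriv \<phi>) x) (at x)"
    and tf_c2: "continuous_on UNIV (deriv (deriv \<phi>))"
    and tf_0: "\<And>x. x \<notin> {0<..<B} \<Longrightarrow> \<phi> x = 0"
    and tf_d0: "\<And>x. x \<notin> {0<..<B} \<Longrightarrow> deriv \<phi> x = 0"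
proof -
  have D: "\<And>n x. ((deriv ^^ n) \<phi>) differentiable (at x)"
    and S: "closure {x. \<phi> x \<noteq> 0} \<subseteq> {0<..<B}"
    using tf unfolding test_fun_def by auto
  show d1: "(\<phi> has_real_derivative deriv \<phi> x) (at x)" for x
    using D[of 0 x] by (simp add: DERIV_deriv_iff_real_differentiable)
  show "(deriv \<phi> has_real_derivative deriv (deriv \<phi>) x) (at x)" for x
    using D[of 1 x] by (simp add: DERIV_deriv_iff_real_differentiable)
  show "continuous_on UNIV (deriv (deriv \<phi>))"
  proof (rule differentiable_imp_continuous_on)
    have e: "(deriv ^^ 2) \<phi> = deriv (deriv \<phi>)" by (simp add: numeral_2_eq_2)
    show "deriv (deriv \<phi>) differentiable_on UNIV"
      unfolding differentiable_on_def using D[of 2] unfolding e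
      by (blast intro: differentiable_at_withinI)
  qed
  show z: "\<phi> x = 0" if "x \<notin> {0<..<B}" for x
    using that S closure_subset[of "{x. \<phi> x \<noteq> 0}"] by auto
  show "deriv \<phi> x = 0" if x: "x \<notin> {0<..<B}" for x
  proof -
    define U where "U = - closure {x. \<phi> x \<noteq> 0}"
    have U: "open U" "x \<in> U" using x S by (auto simp: U_def)
    have Z: "\<phi> y = 0" if "y \<in> U" for y
      using that closure_subset[of "{x. \<phi> x \<noteq> 0}"] unfolding U_def by auto
    have "((\<lambda>_. 0) has_real_derivative deriv \<phi> x) (at x)"
      by (rule has_field_derivative_transform_within_open[OF d1 U]) (rule Z)
    moreover have "((\<lambda>_. 0) has_real_derivative 0) (at x)" by simp
    ultimately show ?thesis using DERIV_unique by blast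
  qed
qed

lemma prod_vd:
  fixes p p' :: "real \<Rightarrow> real"
  assumes "(p has_real_derivative p' x) (at x)"
  shows "((\<lambda>x. of_real (p x) * cis (w * x)) has_vector_derivative
          (of_real (p' x) * cis (w * x) + of_real (p x) * (\<i> * of_real w * cis (w * x)))) (at x)"
proof -
  have "((\<lambda>x. of_real (p x) * cis (w * x)) has_vector_derivative
          (of_real (p x) * (\<i> * of_real w * cis (w * x)) + of_real (p' x) * cis (w * x))) (at x)"
    by (rule has_vector_derivative_mult[OF has_vector_derivative_of_real[OF assms] cis_vd])
  then show ?thesis by (simp add: add.commute)
qed



lemma has_sum_finite_sum:
  fixes f :: "'i \<Rightarrow> 'a \<Rightarrow> 'b::topological_comm_monoid_add"
  assumes "finite I" "\<And>i. i \<in> I \<Longrightarrow> (f i has_sum s i) A"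
  shows "((\<lambda>x. \<Sum>i\<in>I. f i x) has_sum (\<Sum>i\<in>I. s i)) A"
  using assms
proof (induction I rule: finite_induct)
  case empty then show ?case by simp
next
  case (insert i I)
  then show ?case by (simp add: has_sum_add)
qed

lemma periodic_int:
  fixes c :: "int \<Rightarrow> 'a"
  assumes c_per: "\<forall>k. c (k + int J) = c k"
  shows "c (k + m * int J) = c k"
proof -
  have pos: "c (k + int n * int J) = c k" for n k
  proof (induction n arbitrary: k)
    case 0 then show ?case by simp
  next
    case (Suc n)
    have "c (k + int (Suc n) * int J) = c ((k + int n * int J) + int J)" by (simp add: algebra_simps)
    also have "\<dots> = c (k + int n * int J)" using c_per by blast
    finally show ?case using Suc by simp
  qed
  show ?thesis
  proof (cases "m \<ge> 0")
    case True then show ?thesis using pos[of k "nat m"] by simp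
  next
    case False
    have "c (k + m * int J) = c ((k + m * int J) + int (nat (- m)) * int J)" by (rule pos[symmetric])
    also have "(k + m * int J) + int (nat (- m)) * int J = k" using False by (simp add: algebra_simps)
    finally show ?thesis .
  qed
qed

lemma int_eq_from_interval:
  fixes T x y :: real and a a' :: int
  assumes T: "T > 0" and x: "0 \<le> x" "x < T" and y: "0 \<le> y" "y < T"
    and e: "x + of_int a * T = y + of_int a' * T"
  shows "a = a'"
proof -
  have "of_int (a - a') * T = y - x" using e by (simp add: algebra_simps)
  then have "\<bar>of_int (a - a') * T\<bar> = \<bar>y - x\<bar>" by (simp only:)
  then have "\<bar>of_int (a - a') :: real\<bar> * T = \<bar>y - x\<bar>" using T by (simp only: abs_mult abs_of_pos)
  moreover have "\<bar>y - x\<bar> < 1 * T" using x y by linarith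
  ultimately have "\<bar>of_int (a - a') :: real\<bar> * T < 1 * T" by simp
  then have "\<bar>of_int (a - a') :: real\<bar> < 1" using T by (simp only: mult_less_cancel_right)
  then show ?thesis by linarith
qed

lemma supp_decomp:
  fixes C :: "real \<Rightarrow> real \<Rightarrow> real" and a b :: "nat \<Rightarrow> int"
  assumes T_pos: "T > 0" and B_pos: "B > 0"
    and supp: "{(t, \<gamma>). C t \<gamma> \<noteq> 0} \<subseteq>
               (\<Union>j\<in>{1..J}. (\<lambda>(x, y). (x + of_int (a j) * T, y + of_int (b j) * B)) ` rect T B)"
    and distinct: "inj_on (\<lambda>j. (a j, b j)) {1..J}"
    and t: "0 \<le> t" "t < T"
  shows "C (t + of_int a0 * T) \<gamma> =
      (\<Sum>j\<in>{1..J}. if a j = a0 then Cj C a b T B j t (\<gamma> - of_int (b j) * B) else 0)"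
proof (cases "C (t + of_int a0 * T) \<gamma> = 0")
  case True
  have "(if a j = a0 then Cj C a b T B j t (\<gamma> - of_int (b j) * B) else 0) = 0" for j
  proof (cases "a j = a0")
    case True
    then show ?thesis using \<open>C (t + of_int a0 * T) \<gamma> = 0\<close> by (simp add: Cj_def)
  qed simp
  then show ?thesis using True by simp
next
  case False
  then obtain j0 x y where j0: "j0 \<in> {1..J}" and xy: "(x, y) \<in> rect T B"
    and eq: "(t + of_int a0 * T, \<gamma>) = (x + of_int (a j0) * T, y + of_int (b j0) * B)"
  proof -
    have "(t + of_int a0 * T, \<gamma>) \<in> {(t, \<gamma>). C t \<gamma> \<noteq> 0}" using False by simp
    then have "(t + of_int a0 * T, \<gamma>) \<in> (\<Union>j\<in>{1..J}. (\<lambda>(x, y). (x + of_int (a j) * T, y + of_int (b j) * B)) ` rect T B)"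
      using supp by blast
    then obtain j0 where j0: "j0 \<in> {1..J}" and mem:
      "(t + of_int a0 * T, \<gamma>) \<in> (\<lambda>(x, y). (x + of_int (a j0) * T, y + of_int (b j0) * B)) ` rect T B"
      by (rule UN_E)
    from mem obtain p where p: "p \<in> rect T B"
      "(t + of_int a0 * T, \<gamma>) = (\<lambda>(x, y). (x + of_int (a j0) * T, y + of_int (b j0) * B)) p"
      by (rule imageE)
    obtain x y where "p = (x, y)" by (cases p)
    then show ?thesis using that[OF j0, of x y] p by simp
  qed
  have xr: "0 \<le> x" "x < T" "0 \<le> y" "y < B" using xy by (auto simp: rect_def)
  have a0: "a j0 = a0"
    using int_eq_from_interval[OF T_pos t xr(1,2), of a0 "a j0"] eq by simp
  have tm: "(if a j = a0 then Cj C a b T B j t (\<gamma> - of_int (b j) * B) else 0)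
      = (if j = j0 then Cj C a b T B j0 t (\<gamma> - of_int (b j0) * B) else 0)" if j: "j \<in> {1..J}" for j
  proof (cases "j = j0")
    case True then show ?thesis using a0 by simp
  next
    case False
    show ?thesis
    proof (cases "a j = a0 \<and> (t, \<gamma> - of_int (b j) * B) \<in> rect T B")
      case True
      then have g1: "0 \<le> \<gamma> - of_int (b j) * B" "\<gamma> - of_int (b j) * B < B" unfolding rect_def by auto
      have g2: "\<gamma> = y + of_int (b j0) * B" using eq by (simp only: prod.inject)
      have g3: "(\<gamma> - of_int (b j) * B) + of_int (b j) * B = y + of_int (b j0) * B" using g2 by simp
      have "b j = b j0"
        by (rule int_eq_from_interval[OF B_pos g1 xr(3,4) g3])
      then have "(a j, b j) = (a j0, b j0)" using True a0 by simp
      then have "j = j0" using inj_onD[OF distinct _ j j0] by simp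
      then show ?thesis using False by simp
    next
      case False2: False
      then show ?thesis using False by (cases "a j = a0") (simp_all add: Cj_def indicator_def)
    qed
  qed
  have "(\<Sum>j\<in>{1..J}. if a j = a0 then Cj C a b T B j t (\<gamma> - of_int (b j) * B) else 0)
      = (\<Sum>j\<in>{1..J}. if j = j0 then Cj C a b T B j0 t (\<gamma> - of_int (b j0) * B) else 0)"
    by (rule sum.cong[OF refl tm])
  also have "\<dots> = Cj C a b T B j0 t (\<gamma> - of_int (b j0) * B)"
    using j0 by (simp add: sum.delta)
  also have "\<dots> = C (t + of_int a0 * T) \<gamma>"
  proof -
    have "(t, \<gamma> - of_int (b j0) * B) \<in> rect T B" using eq xr t by (auto simp: rect_def)
    then show ?thesis unfolding Cj_def using a0 by simp
  qed
  finally show ?thesis by simp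
qed



lemma ind_rect: "indicator (rect T B) (t, s) = (indicator {0..<T} t * indicator {0..<B} s :: real)"
  by (simp add: rect_def indicator_def)

lemma Cj_shift_integrable:
  fixes C :: "real \<Rightarrow> real \<Rightarrow> real"
  assumes C_int: "\<forall>t. integrable lborel (\<lambda>\<gamma>. C t \<gamma>)"
  shows "integrable lborel (\<lambda>\<gamma>. cis (w * \<gamma>) * complex_of_real (Cj C a b T B j t (\<gamma> - of_int (b j) * B)))"
proof (rule Bochner_Integration.integrable_bound[where f="\<lambda>\<gamma>. C (t + of_int (a j) * T) \<gamma>"])
  have ci: "integrable lborel (\<lambda>\<gamma>. C (t + of_int (a j) * T) \<gamma>)" using C_int by blast
  then show "integrable lborel (\<lambda>\<gamma>. C (t + of_int (a j) * T) \<gamma>)" .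
  have cm: "(\<lambda>\<gamma>. C (t + of_int (a j) * T) \<gamma>) \<in> borel_measurable lborel"
    using ci by (rule borel_measurable_integrable)
  have im: "(\<lambda>\<gamma>. indicator {0..<B} (\<gamma> - of_int (b j) * B) :: real) \<in> borel_measurable lborel"
  proof -
    have "(\<lambda>\<gamma>. indicator {0..<B} (\<gamma> - of_int (b j) * B) :: real) = indicator {of_int (b j) * B..<B + of_int (b j) * B}"
      by (rule ext) (simp add: indicator_def algebra_simps)
    then show ?thesis by simp
  qed
  have cjeq: "(\<lambda>\<gamma>. Cj C a b T B j t (\<gamma> - of_int (b j) * B)) =
      (\<lambda>\<gamma>. indicator {0..<T} t * indicator {0..<B} (\<gamma> - of_int (b j) * B) * C (t + of_int (a j) * T) \<gamma>)"
    by (simp add: Cj_def ind_rect)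
  then show "(\<lambda>\<gamma>. cis (w * \<gamma>) * complex_of_real (Cj C a b T B j t (\<gamma> - of_int (b j) * B))) \<in> borel_measurable lborel"
  proof -
    note [measurable] = cm im
    have cism: "(\<lambda>\<gamma>. cis (w * \<gamma>)) \<in> borel_measurable lborel"
      by (simp add: borel_measurable_continuous_onI continuous_on_cis continuous_on_mult_left continuous_on_id measurable_lborel1)
    note [measurable] = cism
    have "(\<lambda>\<gamma>. Cj C a b T B j t (\<gamma> - of_int (b j) * B)) \<in> borel_measurable lborel"
      by (subst cjeq) measurable
    note [measurable] = this
    show ?thesis by measurable
  qed
  show "AE \<gamma> in lborel. norm (cis (w * \<gamma>) * complex_of_real (Cj C a b T B j t (\<gamma> - of_int (b j) * B)))
          \<le> norm (C (t + of_int (a j) * T) \<gamma>)"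
    by (rule AE_I2) (auto simp: Cj_def norm_mult indicator_def)
qed



lemma Ph_decomp:
  fixes C :: "real \<Rightarrow> real \<Rightarrow> real" and a b :: "nat \<Rightarrow> int"
  assumes T_pos: "T > 0" and B_pos: "B > 0"
    and C_int: "\<forall>t. integrable lborel (\<lambda>\<gamma>. C t \<gamma>)"
    and supp: "{(t, \<gamma>). C t \<gamma> \<noteq> 0} \<subseteq>
               (\<Union>j\<in>{1..J}. (\<lambda>(x, y). (x + of_int (a j) * T, y + of_int (b j) * B)) ` rect T B)"
    and distinct: "inj_on (\<lambda>j. (a j, b j)) {1..J}"
    and t: "0 \<le> t" "t < T"
  shows "Ph C \<tau> (t + of_int a0 * T) =
    (\<Sum>j\<in>{1..J}. if a j = a0 then cis ((- 2 * pi * \<tau>) * (of_int (b j) * B)) *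
        (LINT \<gamma>|lborel. cis ((- 2 * pi * \<tau>) * \<gamma>) * of_real (Cj C a b T B j t \<gamma>)) else 0)"
proof -
  define w where "w = - 2 * pi * \<tau>"
  have "Ph C \<tau> (t + of_int a0 * T) = (LINT \<gamma>|lborel. cis (w * \<gamma>) * of_real (C (t + of_int a0 * T) \<gamma>))"
    unfolding Ph_def w_def by (simp add: mult_ac)
  also have "\<dots> = (LINT \<gamma>|lborel. (\<Sum>j\<in>{1..J}. if a j = a0 then
        cis (w * \<gamma>) * of_real (Cj C a b T B j t (\<gamma> - of_int (b j) * B)) else 0))"
  proof (rule Bochner_Integration.integral_cong[OF refl])
    fix \<gamma>
    have "cis (w * \<gamma>) * of_real (C (t + of_int a0 * T) \<gamma>) = cis (w * \<gamma>) *
        of_real (\<Sum>j\<in>{1..J}. if a j = a0 then Cj C a b T B j t (\<gamma> - of_int (b j) * B) else 0)"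
      by (subst supp_decomp[OF T_pos B_pos supp distinct t]) (rule refl)
    also have "\<dots> = (\<Sum>j\<in>{1..J}. cis (w * \<gamma>) * of_real (if a j = a0 then Cj C a b T B j t (\<gamma> - of_int (b j) * B) else 0))"
      by (simp add: sum_distrib_left)
    also have "\<dots> = (\<Sum>j\<in>{1..J}. if a j = a0 then
        cis (w * \<gamma>) * of_real (Cj C a b T B j t (\<gamma> - of_int (b j) * B)) else 0)"
      by (rule sum.cong) auto
    finally show "cis (w * \<gamma>) * of_real (C (t + of_int a0 * T) \<gamma>) = \<dots>" .
  qed
  also have "\<dots> = (\<Sum>j\<in>{1..J}. LINT \<gamma>|lborel. (if a j = a0 then
        cis (w * \<gamma>) * of_real (Cj C a b T B j t (\<gamma> - of_int (b j) * B)) else 0))"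
  proof (rule Bochner_Integration.integral_sum)
    fix j
    show "integrable lborel (\<lambda>\<gamma>. if a j = a0 then
        cis (w * \<gamma>) * of_real (Cj C a b T B j t (\<gamma> - of_int (b j) * B)) else 0)"
      by (cases "a j = a0") (simp_all add: Cj_shift_integrable[OF C_int])
  qed
  also have "\<dots> = (\<Sum>j\<in>{1..J}. if a j = a0 then cis (w * (of_int (b j) * B)) *
        (LINT \<gamma>|lborel. cis (w * \<gamma>) * of_real (Cj C a b T B j t \<gamma>)) else 0)"
  proof (rule sum.cong[OF refl])
    fix j
    define s where "s = of_int (b j) * B"
    have "(LINT \<gamma>|lborel. cis (w * \<gamma>) * of_real (Cj C a b T B j t (\<gamma> - s)))
        = \<bar>1\<bar> *\<^sub>R (LINT \<gamma>|lborel. cis (w * (s + 1 * \<gamma>)) * of_real (Cj C a b T B j t ((s + 1 * \<gamma>) - s)))"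
      by (rule lborel_integral_real_affine) simp
    also have "\<dots> = (LINT \<gamma>|lborel. cis (w * s) * (cis (w * \<gamma>) * of_real (Cj C a b T B j t \<gamma>)))"
      by (simp add: distrib_left cis_mult[symmetric] mult_ac)
    also have "\<dots> = cis (w * s) * (LINT \<gamma>|lborel. cis (w * \<gamma>) * of_real (Cj C a b T B j t \<gamma>))"
      by simp
    finally show "(LINT \<gamma>|lborel. (if a j = a0 then
        cis (w * \<gamma>) * of_real (Cj C a b T B j t (\<gamma> - of_int (b j) * B)) else 0)) =
      (if a j = a0 then cis (w * (of_int (b j) * B)) *
        (LINT \<gamma>|lborel. cis (w * \<gamma>) * of_real (Cj C a b T B j t \<gamma>)) else 0)"
      unfolding s_def by simp
  qed
  finally show ?thesis unfolding w_def .
qed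



lemma cis_period_lemma:
  assumes JBT: "real J * B * T = 1" and J: "J > 0"
  shows "cis ((- 2 * pi * (of_int (m * int J + int r) * T)) * (of_int bj * B))
       = cis (- 2 * pi * of_nat r * of_int bj / of_nat J)"
proof -
  have TB: "T * B = 1 / real J" using JBT J by (simp add: field_simps)
  have "(- 2 * pi * (of_int (m * int J + int r) * T)) * (of_int bj * B)
      = - 2 * pi * (of_int (m * int J + int r) * of_int bj) * (T * B)" by (simp add: mult_ac)
  also have "\<dots> = - 2 * pi * of_nat r * of_int bj / of_nat J + 2 * pi * of_int (- m * bj)"
    unfolding TB using J by (simp add: field_simps)
  finally have e: "(- 2 * pi * (of_int (m * int J + int r) * T)) * (of_int bj * B)
      = - 2 * pi * of_nat r * of_int bj / of_nat J + 2 * pi * of_int (- m * bj)" .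
  have c1: "cis (2 * pi * real_of_int (- m * bj)) = 1" by (rule cis_multiple_2pi) simp
  show ?thesis unfolding e cis_mult[symmetric] c1 by simp
qed



lemma Pi_decomp:
  fixes C :: "real \<Rightarrow> real \<Rightarrow> real" and a b :: "nat \<Rightarrow> int" and c :: "int \<Rightarrow> complex"
  assumes T_pos: "T > 0" and B_pos: "B > 0"
    and JBT: "real J * B * T = 1" and J: "J > 0"
    and C_int: "\<forall>t. integrable lborel (\<lambda>\<gamma>. C t \<gamma>)"
    and supp: "{(t, \<gamma>). C t \<gamma> \<noteq> 0} \<subseteq>
               (\<Union>j\<in>{1..J}. (\<lambda>(x, y). (x + of_int (a j) * T, y + of_int (b j) * B)) ` rect T B)"
    and distinct: "inj_on (\<lambda>j. (a j, b j)) {1..J}"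
    and c_per: "\<forall>k. c (k + int J) = c k"
    and t: "0 \<le> t" "t < T"
  shows "Pi_fun C c T (m * int J + int r) t =
    (\<Sum>j\<in>{1..J}. A_ent c a b J r j *
       (LINT \<gamma>|lborel. cis ((- 2 * pi * (of_int (m * int J + int r) * T)) * \<gamma>) * of_real (Cj C a b T B j t \<gamma>)))"
proof -
  define n where "n = m * int J + int r"
  define \<tau> where "\<tau> = of_int n * T"
  define Q where "Q j = (LINT \<gamma>|lborel. cis ((- 2 * pi * \<tau>) * \<gamma>) * of_real (Cj C a b T B j t \<gamma>))" for j
  define Z where "Z j = cis ((- 2 * pi * \<tau>) * (of_int (b j) * B))" for j
  define V where "V j = cnj (c (n - a j)) * c (- a j) * (Z j * Q j)" for j
  define f where "f k = cnj (c (k + n)) * c k * Ph C (of_int n * T) (t - of_int k * T)" for k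
  have tmk: "f k = (\<Sum>j\<in>{1..J}. if k = - a j then V j else 0)" for k
  proof -
    have e: "t - of_int k * T = t + of_int (- k) * T" by simp
    have P: "Ph C (of_int n * T) (t + of_int (- k) * T) = (\<Sum>j\<in>{1..J}. if a j = - k then Z j * Q j else 0)"
      unfolding Z_def Q_def \<tau>_def by (rule Ph_decomp[OF T_pos B_pos C_int supp distinct t])
    have "f k = cnj (c (k + n)) * c k *
        (\<Sum>j\<in>{1..J}. if a j = - k then Z j * Q j else 0)"
      unfolding f_def e P ..
    also have "\<dots> = (\<Sum>j\<in>{1..J}. if k = - a j then V j else 0)"
      unfolding sum_distrib_left
    proof (rule sum.cong[OF refl])
      fix j
      show "cnj (c (k + n)) * c k * (if a j = - k then Z j * Q j else 0) = (if k = - a j then V j else 0)"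
      proof (cases "k = - a j")
        case True
        then have "a j = - k" by simp
        then show ?thesis using True by (simp add: V_def algebra_simps)
      qed auto
    qed
    finally show ?thesis .
  qed
  define K where "K = (\<lambda>j. - a j) ` {1..J}"
  have fK: "finite K" unfolding K_def by simp
  have "Pi_fun C c T n t = infsum f UNIV" unfolding Pi_fun_def f_def by simp
  also have "\<dots> = infsum f K"
    by (rule infsum_cong_neutral) (auto simp: tmk K_def intro!: sum.neutral)
  also have "\<dots> = sum f K" using fK by simp
  also have "\<dots> = (\<Sum>j\<in>{1..J}. \<Sum>k\<in>K. if k = - a j then V j else 0)"
    unfolding tmk by (rule sum.swap)
  also have "\<dots> = (\<Sum>j\<in>{1..J}. V j)"
    by (rule sum.cong[OF refl]) (auto simp: fK K_def)
  also have "\<dots> = (\<Sum>j\<in>{1..J}. A_ent c a b J r j * Q j)"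
  proof (rule sum.cong[OF refl])
    fix j
    have "c (n - a j) = c ((int r - a j) + m * int J)" unfolding n_def by (simp add: algebra_simps)
    also have "\<dots> = c (int r - a j)" by (rule periodic_int[OF c_per])
    finally have cc: "c (n - a j) = c (int r - a j)" .
    have zz: "Z j = cis (- 2 * pi * of_nat r * of_int (b j) / of_nat J)"
      unfolding Z_def \<tau>_def n_def by (rule cis_period_lemma[OF JBT J])
    show "V j = A_ent c a b J r j * Q j"
      unfolding V_def A_ent_def cc zz by (simp add: mult_ac)
  qed
  finally show ?thesis unfolding n_def Q_def \<tau>_def .
qed



lemma fourier_test:
  fixes \<phi> :: "real \<Rightarrow> real" and \<omega> :: real
  assumes tf: "test_fun {0<..<B} \<phi>" and B: "B > 0"
  defines "h \<equiv> \<lambda>x. complex_of_real (\<phi> x) * cis (\<omega> * x)"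
  defines "d \<equiv> \<lambda>m. (LINT x:{0..B}|lborel. h x * ef B m x) / of_real B"
  shows "(\<lambda>m. norm (d m)) summable_on UNIV"
    and "\<And>x. x \<in> {0..B} \<Longrightarrow> ((\<lambda>m. d m * ef B (- m) x) has_sum h x) UNIV"
    and "continuous_on UNIV h"
proof -
  note d1 = tf_d1[OF tf] and d2 = tf_d2[OF tf] and c2 = tf_c2[OF tf]
    and z0 = tf_0[OF tf] and z1 = tf_d0[OF tf]
  define P where "P p x = complex_of_real (p x) * cis (\<omega> * x)" for p :: "real \<Rightarrow> real" and x
  define h1 where "h1 x = P (deriv \<phi>) x + (\<i> * of_real \<omega>) * P \<phi> x" for x
  define h2 where "h2 x = (P (deriv (deriv \<phi>)) x + (\<i> * of_real \<omega>) * P (deriv \<phi>) x)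
      + (\<i> * of_real \<omega>) * (P (deriv \<phi>) x + (\<i> * of_real \<omega>) * P \<phi> x)" for x
  have Pvd: "(P p has_vector_derivative (P p' x + (\<i> * of_real \<omega>) * P p x)) (at x)"
    if "(p has_real_derivative p' x) (at x)" for p p' x
    using prod_vd[of p p' x \<omega>, OF that] unfolding P_def by (simp add: mult_ac)
  have hP: "h = P \<phi>" unfolding h_def P_def by auto
  have hd: "(h has_vector_derivative h1 x) (at x)" for x
    unfolding hP h1_def by (rule Pvd[OF d1])
  have h1d: "(h1 has_vector_derivative h2 x) (at x)" for x
    unfolding h1_def h2_def
    by (intro has_vector_derivative_add has_vector_derivative_mult_right Pvd d1 d2)
  have cphi: "continuous_on UNIV \<phi>"
    using d1 by (meson DERIV_continuous continuous_at_imp_continuous_on)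
  have cphi1: "continuous_on UNIV (deriv \<phi>)"
    using d2 by (meson DERIV_continuous continuous_at_imp_continuous_on)
  have cP: "continuous_on S (P p)" if "continuous_on UNIV p" for p S
    unfolding P_def by (intro continuous_intros continuous_on_subset[OF that]) auto
  have h2c: "continuous_on {0..B} h2"
    unfolding h2_def by (intro continuous_intros cP c2 cphi1 cphi)
  show hc: "continuous_on UNIV h" unfolding hP by (rule cP[OF cphi])
  have b0: "0 \<notin> {0<..<B}" "B \<notin> {0<..<B}" by auto
  have hL: "h B = h 0" unfolding h_def using z0[OF b0(1)] z0[OF b0(2)] by simp
  have h1L: "h1 B = h1 0" unfolding h1_def P_def
    using z0[OF b0(1)] z0[OF b0(2)] z1[OF b0(1)] z1[OF b0(2)] by simp
  have cs: "(\<lambda>k. norm (LINT x:{0..B}|lborel. h x * ef B k x)) summable_on UNIV"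
    by (rule coeff_summable[OF B hd h1d h2c hL h1L])
  show ds: "(\<lambda>m. norm (d m)) summable_on UNIV"
  proof -
    have "(\<lambda>k. (1 / B) * norm (LINT x:{0..B}|lborel. h x * ef B k x)) summable_on UNIV"
      by (rule summable_on_cmult_right[OF cs])
    moreover have "(\<lambda>k. (1 / B) * norm (LINT x:{0..B}|lborel. h x * ef B k x)) = (\<lambda>m. norm (d m))"
      using B by (auto simp: d_def norm_divide)
    ultimately show ?thesis by simp
  qed
  fix x assume x: "x \<in> {0..B}"
  show "((\<lambda>m. d m * ef B (- m) x) has_sum h x) UNIV"
    by (rule fourier_inversion[OF B continuous_on_subset[OF hc] hL _ ds x]) (auto simp: d_def)
qed



lemma Cj_integrable:
  fixes C :: "real \<Rightarrow> real \<Rightarrow> real"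
  assumes C_int: "\<forall>t. integrable lborel (\<lambda>\<gamma>. C t \<gamma>)"
  shows "integrable lborel (\<lambda>\<gamma>. Cj C a b T B j t \<gamma>)"
proof -
  define s where "s = of_int (b j) * B"
  have i1: "integrable lborel (\<lambda>\<gamma>. C (t + of_int (a j) * T) (s + 1 * \<gamma>))"
    by (rule lborel_integrable_real_affine) (use C_int in auto)
  have i2: "integrable lborel (\<lambda>\<gamma>. indicator {0..<B} \<gamma> *\<^sub>R C (t + of_int (a j) * T) (s + 1 * \<gamma>))"
    by (rule integrable_mult_indicator[OF _ i1]) simp
  have i3: "integrable lborel (\<lambda>\<gamma>. indicator {0..<T} t * (indicator {0..<B} \<gamma> *\<^sub>R C (t + of_int (a j) * T) (s + 1 * \<gamma>)))"
    using i2 by simp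
  have "(\<lambda>\<gamma>. Cj C a b T B j t \<gamma>) = (\<lambda>\<gamma>. indicator {0..<T} t * (indicator {0..<B} \<gamma> *\<^sub>R C (t + of_int (a j) * T) (s + 1 * \<gamma>)))"
    by (rule ext) (simp add: Cj_def ind_rect s_def add.commute)
  then show ?thesis using i3 by simp
qed

lemma Cj_zero_outside:
  "\<gamma> \<notin> {0..B} \<Longrightarrow> Cj C a b T B j t \<gamma> = 0"
  by (auto simp: Cj_def rect_def indicator_def)

lemma test_fun_bounded:
  fixes \<phi> :: "real \<Rightarrow> real"
  assumes tf: "test_fun {0<..<B} \<phi>"
  obtains M where "M > 0" "\<And>x. \<bar>\<phi> x\<bar> \<le> M"
proof -
  have cphi: "continuous_on UNIV \<phi>"
    using tf_d1[OF tf] by (meson DERIV_continuous continuous_at_imp_continuous_on)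
  have "compact (\<phi> ` {0..B})"
    by (rule compact_continuous_image[OF continuous_on_subset[OF cphi]]) auto
  then obtain M where M: "M > 0" "\<And>x. x \<in> {0..B} \<Longrightarrow> norm (\<phi> x) \<le> M"
    using compact_imp_bounded bounded_pos by (metis image_eqI)
  show ?thesis
  proof (rule that[OF M(1)])
    fix x show "\<bar>\<phi> x\<bar> \<le> M"
    proof (cases "x \<in> {0..B}")
      case True then show ?thesis using M(2) by auto
    next
      case False then have "x \<notin> {0<..<B}" by auto
      then show ?thesis using tf_0[OF tf] M(1) by simp
    qed
  qed
qed



lemma part1:
  fixes J :: nat and T B :: real
    and C :: "real \<Rightarrow> real \<Rightarrow> real"
    and a b :: "nat \<Rightarrow> int"
    and c :: "int \<Rightarrow> complex"
  assumes J: "J > 0"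
    and T_pos: "T > 0" and B_pos: "B > 0"
    and JBT: "real J * B * T = 1"
    and C_int: "\<forall>t. integrable lborel (\<lambda>\<gamma>. C t \<gamma>)"
    and supp: "{(t, \<gamma>). C t \<gamma> \<noteq> 0} \<subseteq>
               (\<Union>j\<in>{1..J}. (\<lambda>(x, y). (x + of_int (a j) * T, y + of_int (b j) * B)) ` rect T B)"
    and distinct: "inj_on (\<lambda>j. (a j, b j)) {1..J}"
    and c_per: "\<forall>k. c (k + int J) = c k"
    and t: "t \<in> {0..<T}" and tf: "test_fun {0<..<B} \<phi>"
  shows "(S_term C c J T B r t \<phi> has_sum
           (LINT \<gamma>|lborel. of_real (\<phi> \<gamma>) *
               (\<Sum>j=1..J. A_ent c a b J r j * of_real (Cj C a b T B j t \<gamma>)))) UNIV"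
proof -
  have t': "0 \<le> t" "t < T" using t by auto
  define \<omega> where "\<omega> = 2 * pi * real r * T"
  define h where "h = (\<lambda>x. complex_of_real (\<phi> x) * cis (\<omega> * x))"
  define d where "d = (\<lambda>m. (LINT x:{0..B}|lborel. h x * ef B m x) / of_real B)"
  have FT1: "(\<lambda>m. norm (d m)) summable_on UNIV"
    using fourier_test(1)[OF tf B_pos, where \<omega>=\<omega>] unfolding d_def h_def .
  have FT2: "((\<lambda>m. d m * ef B (- m) x) has_sum h x) UNIV" if "x \<in> {0..B}" for x
    using fourier_test(2)[OF tf B_pos that, where \<omega>=\<omega>] unfolding d_def h_def .
  have FT3: "continuous_on UNIV h"
    using fourier_test(3)[OF tf B_pos, where \<omega>=\<omega>] unfolding d_def h_def .
  have TJ: "T * real J = 1 / B" using JBT B_pos by (simp add: field_simps)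
  have z0: "\<phi> x = 0" if "x \<notin> {0<..<B}" for x using tf_0[OF tf] that by blast
  have F1: "(LINT \<gamma>|lborel. of_real (\<phi> \<gamma>) * cis (2 * pi * \<gamma> * T * of_int (m * int J + int r)))
            = of_real B * d m" for m
  proof -
    have "(LINT \<gamma>|lborel. of_real (\<phi> \<gamma>) * cis (2 * pi * \<gamma> * T * of_int (m * int J + int r)))
        = (LINT \<gamma>:{0..B}|lborel. h \<gamma> * ef B m \<gamma>)"
      unfolding set_lebesgue_integral_def
    proof (rule Bochner_Integration.integral_cong[OF refl])
      fix \<gamma>
      show "of_real (\<phi> \<gamma>) * cis (2 * pi * \<gamma> * T * of_int (m * int J + int r))
          = indicator {0..B} \<gamma> *\<^sub>R (h \<gamma> * ef B m \<gamma>)"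
      proof (cases "\<gamma> \<in> {0..B}")
        case True
        have "2 * pi * \<gamma> * T * of_int (m * int J + int r) = \<omega> * \<gamma> + 2 * pi * of_int m * \<gamma> / B"
        proof -
          have "2 * pi * \<gamma> * T * of_int (m * int J + int r)
              = 2 * pi * \<gamma> * of_int m * (T * real J) + 2 * pi * real r * T * \<gamma>"
            by (simp add: algebra_simps)
          also have "\<dots> = \<omega> * \<gamma> + 2 * pi * of_int m * \<gamma> / B" unfolding TJ \<omega>_def by simp
          finally show ?thesis .
        qed
        then show ?thesis using True
          by (simp add: h_def ef_def cis_mult[symmetric] mult_ac)
      next
        case False
        then have "\<gamma> \<notin> {0<..<B}" by auto
        then show ?thesis using False z0 by simp
      qed
    qed
    also have "\<dots> = of_real B * d m" unfolding d_def using B_pos by simp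
    finally show ?thesis .
  qed
  define f where "f j \<gamma> = cis (- \<omega> * \<gamma>) * of_real (Cj C a b T B j t \<gamma>)" for j \<gamma>
  have Pi: "Pi_fun C c T (m * int J + int r) t =
      (\<Sum>j\<in>{1..J}. A_ent c a b J r j * (LINT \<gamma>|lborel. f j \<gamma> * ef B (- m) \<gamma>))" for m
  proof -
    have "Pi_fun C c T (m * int J + int r) t =
      (\<Sum>j\<in>{1..J}. A_ent c a b J r j *
       (LINT \<gamma>|lborel. cis ((- 2 * pi * (of_int (m * int J + int r) * T)) * \<gamma>) * of_real (Cj C a b T B j t \<gamma>)))"
      by (rule Pi_decomp[OF T_pos B_pos JBT J C_int supp distinct c_per t'])
    also have "\<dots> = (\<Sum>j\<in>{1..J}. A_ent c a b J r j * (LINT \<gamma>|lborel. f j \<gamma> * ef B (- m) \<gamma>))"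
    proof -
      have pw: "cis ((- 2 * pi * (of_int (m * int J + int r) * T)) * \<gamma>) * of_real (Cj C a b T B j t \<gamma>)
          = f j \<gamma> * ef B (- m) \<gamma>" for j \<gamma>
      proof -
        have "(- 2 * pi * (of_int (m * int J + int r) * T)) * \<gamma> = - \<omega> * \<gamma> + 2 * pi * of_int (- m) * \<gamma> / B"
        proof -
          have "(- 2 * pi * (of_int (m * int J + int r) * T)) * \<gamma>
              = - (2 * pi * \<gamma> * of_int m * (T * real J)) - 2 * pi * real r * T * \<gamma>"
            by (simp add: algebra_simps)
          also have "\<dots> = - \<omega> * \<gamma> + 2 * pi * of_int (- m) * \<gamma> / B" unfolding TJ \<omega>_def by simp
          finally show ?thesis .
        qed
        then show ?thesis
          unfolding f_def ef_def by (simp only: cis_mult[symmetric] mult_ac)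
      qed
      show ?thesis by (simp only: pw)
    qed
    finally show ?thesis .
  qed
  have fint: "integrable lborel (f j)" for j
  proof (rule Bochner_Integration.integrable_bound[where f="\<lambda>\<gamma>. Cj C a b T B j t \<gamma>"])
    show "integrable lborel (\<lambda>\<gamma>. Cj C a b T B j t \<gamma>)" by (rule Cj_integrable[OF C_int])
    have cm: "(\<lambda>\<gamma>. Cj C a b T B j t \<gamma>) \<in> borel_measurable lborel"
      by (rule borel_measurable_integrable[OF Cj_integrable[OF C_int]])
    have "continuous_on UNIV (\<lambda>\<gamma>. cis (- \<omega> * \<gamma>))" by (intro continuous_intros)
    then have cism: "(\<lambda>\<gamma>. cis (- \<omega> * \<gamma>)) \<in> borel_measurable lborel"
      by (simp add: borel_measurable_continuous_onI measurable_lborel1)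
    note [measurable] = cm cism
    show "f j \<in> borel_measurable lborel" unfolding f_def by measurable
    show "AE \<gamma> in lborel. norm (f j \<gamma>) \<le> norm (Cj C a b T B j t \<gamma>)"
      by (rule AE_I2) (simp add: f_def norm_mult)
  qed
  have hm: "h \<in> borel_measurable lborel"
    using FT3 by (simp add: borel_measurable_continuous_onI measurable_lborel1)
  have F4: "((\<lambda>m. LINT \<gamma>|lborel. f j \<gamma> * (d m * ef B (- m) \<gamma>)) has_sum
      (LINT \<gamma>|lborel. of_real (\<phi> \<gamma>) * of_real (Cj C a b T B j t \<gamma>))) UNIV" for j
  proof -
    have "((\<lambda>m. LINT \<gamma>|lborel. f j \<gamma> * (d m * ef B (- m) \<gamma>)) has_sum (LINT \<gamma>|lborel. f j \<gamma> * h \<gamma>)) UNIV"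
    proof (rule swap_integral[where X="{0..B}" and E="\<lambda>m. ef B (- m)", OF FT1 _ _ fint _ FT2 hm])
      show "\<And>m x. x \<in> {0..B} \<Longrightarrow> norm (ef B (- m) x) \<le> 1" by simp
      show "\<And>m. ef B (- m) \<in> borel_measurable lborel" by simp
      show "\<And>x. x \<notin> {0..B} \<Longrightarrow> f j x = 0" by (simp add: f_def Cj_zero_outside)
    qed
    moreover have "(LINT \<gamma>|lborel. f j \<gamma> * h \<gamma>) = (LINT \<gamma>|lborel. of_real (\<phi> \<gamma>) * of_real (Cj C a b T B j t \<gamma>))"
    proof (rule Bochner_Integration.integral_cong[OF refl])
      fix \<gamma>
      have "cis (- \<omega> * \<gamma>) * cis (\<omega> * \<gamma>) = 1" by (simp add: cis_mult)
      then show "f j \<gamma> * h \<gamma> = of_real (\<phi> \<gamma>) * of_real (Cj C a b T B j t \<gamma>)"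
        unfolding f_def h_def
        by (metis (no_types, lifting) mult.commute mult.left_commute mult_1_right)
    qed
    ultimately show ?thesis by simp
  qed
  have Sm: "S_term C c J T B r t \<phi> m = (\<Sum>j\<in>{1..J}. A_ent c a b J r j *
      (LINT \<gamma>|lborel. f j \<gamma> * (d m * ef B (- m) \<gamma>)))" for m
  proof -
    have "S_term C c J T B r t \<phi> m = of_real (1 / B) * Pi_fun C c T (m * int J + int r) t * (of_real B * d m)"
      unfolding S_term_def F1 ..
    also have "\<dots> = Pi_fun C c T (m * int J + int r) t * d m" using B_pos by simp
    also have "\<dots> = (\<Sum>j\<in>{1..J}. A_ent c a b J r j * (d m * (LINT \<gamma>|lborel. f j \<gamma> * ef B (- m) \<gamma>)))"
      unfolding Pi sum_distrib_right by (simp add: mult_ac)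
    also have "\<dots> = (\<Sum>j\<in>{1..J}. A_ent c a b J r j * (LINT \<gamma>|lborel. f j \<gamma> * (d m * ef B (- m) \<gamma>)))"
    proof (rule sum.cong[OF refl])
      fix j
      have "(\<lambda>\<gamma>. f j \<gamma> * (d m * ef B (- m) \<gamma>)) = (\<lambda>\<gamma>. d m * (f j \<gamma> * ef B (- m) \<gamma>))"
        by (auto simp: mult_ac)
      then show "A_ent c a b J r j * (d m * (LINT \<gamma>|lborel. f j \<gamma> * ef B (- m) \<gamma>))
          = A_ent c a b J r j * (LINT \<gamma>|lborel. f j \<gamma> * (d m * ef B (- m) \<gamma>))" by simp
    qed
    finally show ?thesis .
  qed
  have hs: "((\<lambda>m. \<Sum>j\<in>{1..J}. A_ent c a b J r j * (LINT \<gamma>|lborel. f j \<gamma> * (d m * ef B (- m) \<gamma>)))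
      has_sum (\<Sum>j\<in>{1..J}. A_ent c a b J r j * (LINT \<gamma>|lborel. of_real (\<phi> \<gamma>) * of_real (Cj C a b T B j t \<gamma>)))) UNIV"
    by (rule has_sum_finite_sum) (auto intro: has_sum_cmult_right F4)
  obtain M where M: "M > 0" "\<And>x. \<bar>\<phi> x\<bar> \<le> M" using test_fun_bounded[OF tf] by blast
  have phim: "\<phi> \<in> borel_measurable lborel"
  proof -
    have "continuous_on UNIV \<phi>"
      using tf_d1[OF tf] by (meson DERIV_continuous continuous_at_imp_continuous_on)
    then show ?thesis by (simp add: borel_measurable_continuous_onI measurable_lborel1)
  qed
  have pint: "integrable lborel (\<lambda>\<gamma>. complex_of_real (\<phi> \<gamma>) * of_real (Cj C a b T B j t \<gamma>))" for j
  proof (rule Bochner_Integration.integrable_bound[where f="\<lambda>\<gamma>. M * Cj C a b T B j t \<gamma>"])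
    show "integrable lborel (\<lambda>\<gamma>. M * Cj C a b T B j t \<gamma>)" using Cj_integrable[OF C_int] by simp
    have cm: "(\<lambda>\<gamma>. Cj C a b T B j t \<gamma>) \<in> borel_measurable lborel"
      by (rule borel_measurable_integrable[OF Cj_integrable[OF C_int]])
    note [measurable] = cm phim
    show "(\<lambda>\<gamma>. complex_of_real (\<phi> \<gamma>) * of_real (Cj C a b T B j t \<gamma>)) \<in> borel_measurable lborel"
      by measurable
    show "AE \<gamma> in lborel. norm (complex_of_real (\<phi> \<gamma>) * of_real (Cj C a b T B j t \<gamma>))
        \<le> norm (M * Cj C a b T B j t \<gamma>)"
    proof (rule AE_I2)
      fix \<gamma>
      have "\<bar>\<phi> \<gamma>\<bar> * \<bar>Cj C a b T B j t \<gamma>\<bar> \<le> M * \<bar>Cj C a b T B j t \<gamma>\<bar>"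
        by (rule mult_right_mono[OF M(2)]) simp
      then show "norm (complex_of_real (\<phi> \<gamma>) * of_real (Cj C a b T B j t \<gamma>))
        \<le> norm (M * Cj C a b T B j t \<gamma>)" using M(1) by (simp add: norm_mult abs_mult)
    qed
  qed
  have F7: "(LINT \<gamma>|lborel. of_real (\<phi> \<gamma>) * (\<Sum>j=1..J. A_ent c a b J r j * of_real (Cj C a b T B j t \<gamma>)))
      = (\<Sum>j\<in>{1..J}. A_ent c a b J r j * (LINT \<gamma>|lborel. of_real (\<phi> \<gamma>) * of_real (Cj C a b T B j t \<gamma>)))"
  proof -
    have "(LINT \<gamma>|lborel. of_real (\<phi> \<gamma>) * (\<Sum>j=1..J. A_ent c a b J r j * of_real (Cj C a b T B j t \<gamma>)))
        = (LINT \<gamma>|lborel. (\<Sum>j=1..J. A_ent c a b J r j * (of_real (\<phi> \<gamma>) * of_real (Cj C a b T B j t \<gamma>))))"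
      by (simp add: sum_distrib_left mult_ac)
    also have "\<dots> = (\<Sum>j=1..J. LINT \<gamma>|lborel. A_ent c a b J r j * (of_real (\<phi> \<gamma>) * of_real (Cj C a b T B j t \<gamma>)))"
      by (rule Bochner_Integration.integral_sum) (use pint in auto)
    also have "\<dots> = (\<Sum>j\<in>{1..J}. A_ent c a b J r j * (LINT \<gamma>|lborel. of_real (\<phi> \<gamma>) * of_real (Cj C a b T B j t \<gamma>)))"
      by simp
    finally show ?thesis .
  qed
  have "S_term C c J T B r t \<phi> = (\<lambda>m. \<Sum>j\<in>{1..J}. A_ent c a b J r j *
      (LINT \<gamma>|lborel. f j \<gamma> * (d m * ef B (- m) \<gamma>)))" by (rule ext) (rule Sm)
  then show ?thesis unfolding F7 using hs by simp
qed



lemma int_sum_Cj: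
  fixes C :: "real \<Rightarrow> real \<Rightarrow> real" and A :: "nat \<Rightarrow> complex"
  assumes C_int: "\<forall>t. integrable lborel (\<lambda>\<gamma>. C t \<gamma>)" and tf: "test_fun {0<..<B} \<phi>"
  shows "(LINT \<gamma>|lborel. of_real (\<phi> \<gamma>) * (\<Sum>j=1..J. A j * of_real (Cj C a b T B j t \<gamma>)))
      = (\<Sum>j\<in>{1..J}. A j * (LINT \<gamma>|lborel. of_real (\<phi> \<gamma>) * of_real (Cj C a b T B j t \<gamma>)))"
proof -
  obtain M where M: "M > 0" "\<And>x. \<bar>\<phi> x\<bar> \<le> M" using test_fun_bounded[OF tf] by blast
  have phim: "\<phi> \<in> borel_measurable lborel"
  proof -
    have "continuous_on UNIV \<phi>"
      using tf_d1[OF tf] by (meson DERIV_continuous continuous_at_imp_continuous_on)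
    then show ?thesis by (simp add: borel_measurable_continuous_onI measurable_lborel1)
  qed
  have pint: "integrable lborel (\<lambda>\<gamma>. complex_of_real (\<phi> \<gamma>) * of_real (Cj C a b T B j t \<gamma>))" for j
  proof (rule Bochner_Integration.integrable_bound[where f="\<lambda>\<gamma>. M * Cj C a b T B j t \<gamma>"])
    show "integrable lborel (\<lambda>\<gamma>. M * Cj C a b T B j t \<gamma>)" using Cj_integrable[OF C_int] by simp
    have cm: "(\<lambda>\<gamma>. Cj C a b T B j t \<gamma>) \<in> borel_measurable lborel"
      by (rule borel_measurable_integrable[OF Cj_integrable[OF C_int]])
    note [measurable] = cm phim
    show "(\<lambda>\<gamma>. complex_of_real (\<phi> \<gamma>) * of_real (Cj C a b T B j t \<gamma>)) \<in> borel_measurable lborel"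
      by measurable
    show "AE \<gamma> in lborel. norm (complex_of_real (\<phi> \<gamma>) * of_real (Cj C a b T B j t \<gamma>))
        \<le> norm (M * Cj C a b T B j t \<gamma>)"
    proof (rule AE_I2)
      fix \<gamma>
      have "\<bar>\<phi> \<gamma>\<bar> * \<bar>Cj C a b T B j t \<gamma>\<bar> \<le> M * \<bar>Cj C a b T B j t \<gamma>\<bar>"
        by (rule mult_right_mono[OF M(2)]) simp
      then show "norm (complex_of_real (\<phi> \<gamma>) * of_real (Cj C a b T B j t \<gamma>))
        \<le> norm (M * Cj C a b T B j t \<gamma>)" using M(1) by (simp add: norm_mult abs_mult)
    qed
  qed
  have "(LINT \<gamma>|lborel. of_real (\<phi> \<gamma>) * (\<Sum>j=1..J. A j * of_real (Cj C a b T B j t \<gamma>)))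
      = (LINT \<gamma>|lborel. (\<Sum>j=1..J. A j * (of_real (\<phi> \<gamma>) * of_real (Cj C a b T B j t \<gamma>))))"
    by (simp add: sum_distrib_left mult_ac)
  also have "\<dots> = (\<Sum>j=1..J. LINT \<gamma>|lborel. A j * (of_real (\<phi> \<gamma>) * of_real (Cj C a b T B j t \<gamma>)))"
    by (rule Bochner_Integration.integral_sum) (use pint in auto)
  also have "\<dots> = (\<Sum>j\<in>{1..J}. A j * (LINT \<gamma>|lborel. of_real (\<phi> \<gamma>) * of_real (Cj C a b T B j t \<gamma>)))"
    by simp
  finally show ?thesis .
qed

lemma part3:
  fixes C :: "real \<Rightarrow> real \<Rightarrow> real" and a b :: "nat \<Rightarrow> int"
  assumes T_pos: "T > 0" and B_pos: "B > 0"
    and supp: "{(t, \<gamma>). C t \<gamma> \<noteq> 0} \<subseteq>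
               (\<Union>j\<in>{1..J}. (\<lambda>(x, y). (x + of_int (a j) * T, y + of_int (b j) * B)) ` rect T B)"
    and distinct: "inj_on (\<lambda>j. (a j, b j)) {1..J}"
  shows "C t \<gamma> = (\<Sum>j=1..J. Cj C a b T B j (t - of_int (a j) * T) (\<gamma> - of_int (b j) * B))"
proof (cases "C t \<gamma> = 0")
  case True
  have "Cj C a b T B j (t - of_int (a j) * T) (\<gamma> - of_int (b j) * B) = 0" for j
    using True by (simp add: Cj_def)
  then show ?thesis using True by simp
next
  case False
  have "(t, \<gamma>) \<in> {(t, \<gamma>). C t \<gamma> \<noteq> 0}" using False by simp
  then have "(t, \<gamma>) \<in> (\<Union>j\<in>{1..J}. (\<lambda>(x, y). (x + of_int (a j) * T, y + of_int (b j) * B)) ` rect T B)"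
    using supp by blast
  then obtain j0 where j0: "j0 \<in> {1..J}" and mem:
    "(t, \<gamma>) \<in> (\<lambda>(x, y). (x + of_int (a j0) * T, y + of_int (b j0) * B)) ` rect T B"
    by (rule UN_E)
  from mem obtain p where p: "p \<in> rect T B"
    "(t, \<gamma>) = (\<lambda>(x, y). (x + of_int (a j0) * T, y + of_int (b j0) * B)) p"
    by (rule imageE)
  obtain x y where pxy: "p = (x, y)" by (cases p)
  have xr: "0 \<le> x" "x < T" "0 \<le> y" "y < B" using p(1) pxy by (auto simp: rect_def)
  have te: "t = x + of_int (a j0) * T" and ge: "\<gamma> = y + of_int (b j0) * B" using p(2) pxy by auto
  have tm: "Cj C a b T B j (t - of_int (a j) * T) (\<gamma> - of_int (b j) * B)
      = (if j = j0 then C t \<gamma> else 0)" if j: "j \<in> {1..J}" for j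
  proof (cases "(t - of_int (a j) * T, \<gamma> - of_int (b j) * B) \<in> rect T B")
    case True
    then have r1: "0 \<le> t - of_int (a j) * T" "t - of_int (a j) * T < T"
      "0 \<le> \<gamma> - of_int (b j) * B" "\<gamma> - of_int (b j) * B < B" unfolding rect_def by auto
    have "a j = a j0"
      by (rule int_eq_from_interval[OF T_pos r1(1,2) xr(1,2)]) (simp add: te)
    moreover have "b j = b j0"
      by (rule int_eq_from_interval[OF B_pos r1(3,4) xr(3,4)]) (simp add: ge)
    ultimately have "j = j0" using inj_onD[OF distinct _ j j0] by simp
    then show ?thesis using True by (simp add: Cj_def)
  next
    case False
    have "j \<noteq> j0"
    proof
      assume "j = j0"
      then have "(t - of_int (a j) * T, \<gamma> - of_int (b j) * B) = (x, y)" using te ge by simp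
      then show False using False p(1) pxy by simp
    qed
    then show ?thesis using False by (simp add: Cj_def)
  qed
  have "(\<Sum>j=1..J. Cj C a b T B j (t - of_int (a j) * T) (\<gamma> - of_int (b j) * B))
      = (\<Sum>j=1..J. if j = j0 then C t \<gamma> else 0)"
    by (rule sum.cong[OF refl tm])
  also have "\<dots> = C t \<gamma>" using j0 by (simp add: sum.delta)
  finally show ?thesis by simp
qed



theorem mainTheorem4:
  fixes J :: nat and T B :: real
    and C :: "real \<Rightarrow> real \<Rightarrow> real"
    and a b :: "nat \<Rightarrow> int"
    and c :: "int \<Rightarrow> complex"
  assumes J_prime: "prime J"
    and T_pos: "T > 0" and B_pos: "B > 0"
    and JBT: "real J * B * T = 1"
    and C_nonneg: "\<forall>t \<gamma>. C t \<gamma> \<ge> 0"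
    and C_int: "\<forall>t. integrable lborel (\<lambda>\<gamma>. C t \<gamma>)"
    and supp: "{(t, \<gamma>). C t \<gamma> \<noteq> 0} \<subseteq>
               (\<Union>j\<in>{1..J}. (\<lambda>(x, y). (x + of_int (a j) * T, y + of_int (b j) * B)) ` rect T B)"
    and distinct: "inj_on (\<lambda>j. (a j, b j)) {1..J}"
    and c_per: "\<forall>k. c (k + int J) = c k"
  shows
    "(\<forall>r\<in>{1..J}. \<forall>t\<in>{0..<T}. \<forall>\<phi>. test_fun {0<..<B} \<phi> \<longrightarrow>
        (S_term C c J T B r t \<phi> has_sum
           (LINT \<gamma>|lborel. of_real (\<phi> \<gamma>) *
               (\<Sum>j=1..J. A_ent c a b J r j * of_real (Cj C a b T B j t \<gamma>)))) UNIV)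
     \<and>
     (\<forall>V. is_inverse_mat J (A_ent c a b J) V \<longrightarrow>
        (\<forall>j\<in>{1..J}. \<forall>t\<in>{0..<T}. \<forall>\<phi>. test_fun {0<..<B} \<phi> \<longrightarrow>
            (LINT \<gamma>|lborel. of_real (\<phi> \<gamma>) * of_real (Cj C a b T B j t \<gamma>)) =
            (\<Sum>r=1..J. V j r * (\<Sum>\<^sub>\<infinity>m::int. S_term C c J T B r t \<phi> m)))
        \<and>
        (\<forall>t \<gamma>. C t \<gamma> = (\<Sum>j=1..J. Cj C a b T B j (t - of_int (a j) * T) (\<gamma> - of_int (b j) * B))))"
proof -
  have J: "J > 0" using J_prime prime_gt_0_nat by blast
  have P1: "\<forall>r\<in>{1..J}. \<forall>t\<in>{0..<T}. \<forall>\<phi>. test_fun {0<..<B} \<phi> \<longrightarrow>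
        (S_term C c J T B r t \<phi> has_sum
           (LINT \<gamma>|lborel. of_real (\<phi> \<gamma>) *
               (\<Sum>j=1..J. A_ent c a b J r j * of_real (Cj C a b T B j t \<gamma>)))) UNIV"
  proof (intro ballI allI impI)
    fix r t \<phi> assume "t \<in> {0..<T}" "test_fun {0<..<B} \<phi>"
    then show "(S_term C c J T B r t \<phi> has_sum
           (LINT \<gamma>|lborel. of_real (\<phi> \<gamma>) *
               (\<Sum>j=1..J. A_ent c a b J r j * of_real (Cj C a b T B j t \<gamma>)))) UNIV"
      by (rule part1[OF J T_pos B_pos JBT C_int supp distinct c_per])
  qed
  have P2: "\<forall>V. is_inverse_mat J (A_ent c a b J) V \<longrightarrow>
        (\<forall>j\<in>{1..J}. \<forall>t\<in>{0..<T}. \<forall>\<phi>. test_fun {0<..<B} \<phi> \<longrightarrow>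
            (LINT \<gamma>|lborel. of_real (\<phi> \<gamma>) * of_real (Cj C a b T B j t \<gamma>)) =
            (\<Sum>r=1..J. V j r * (\<Sum>\<^sub>\<infinity>m::int. S_term C c J T B r t \<phi> m)))"
  proof (intro allI impI ballI)
    fix V j t \<phi>
    assume inv: "is_inverse_mat J (A_ent c a b J) V" and j: "j \<in> {1..J}" and t: "t \<in> {0..<T}"
      and tf: "test_fun {0<..<B} \<phi>"
    define X :: "nat \<Rightarrow> complex" where "X l = (LINT \<gamma>|lborel. of_real (\<phi> \<gamma>) * of_real (Cj C a b T B l t \<gamma>))" for l
    have inf: "(\<Sum>\<^sub>\<infinity>m::int. S_term C c J T B r t \<phi> m) = (\<Sum>l\<in>{1..J}. A_ent c a b J r l * X l)" if r: "r \<in> {1..J}" for r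
    proof -
      have "(\<Sum>\<^sub>\<infinity>m::int. S_term C c J T B r t \<phi> m) =
           (LINT \<gamma>|lborel. of_real (\<phi> \<gamma>) *
               (\<Sum>j=1..J. A_ent c a b J r j * of_real (Cj C a b T B j t \<gamma>)))"
        using P1 r t tf by (simp add: infsumI)
      also have "\<dots> = (\<Sum>l\<in>{1..J}. A_ent c a b J r l * X l)"
        unfolding X_def by (rule int_sum_Cj[OF C_int tf])
      finally show ?thesis .
    qed
    have "(\<Sum>r=1..J. V j r * (\<Sum>\<^sub>\<infinity>m::int. S_term C c J T B r t \<phi> m))
        = (\<Sum>r=1..J. V j r * (\<Sum>l\<in>{1..J}. A_ent c a b J r l * X l))"
      by (rule sum.cong[OF refl]) (simp add: inf)
    also have "\<dots> = (\<Sum>l\<in>{1..J}. (\<Sum>r=1..J. V j r * A_ent c a b J r l) * X l)"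
    proof -
      have "(\<Sum>r=1..J. V j r * (\<Sum>l\<in>{1..J}. A_ent c a b J r l * X l))
          = (\<Sum>r=1..J. \<Sum>l\<in>{1..J}. V j r * A_ent c a b J r l * X l)"
        by (simp add: sum_distrib_left mult_ac)
      also have "\<dots> = (\<Sum>l\<in>{1..J}. \<Sum>r=1..J. V j r * A_ent c a b J r l * X l)"
        by (rule sum.swap)
      also have "\<dots> = (\<Sum>l\<in>{1..J}. (\<Sum>r=1..J. V j r * A_ent c a b J r l) * X l)"
        by (simp add: sum_distrib_right)
      finally show ?thesis .
    qed
    also have "\<dots> = (\<Sum>l\<in>{1..J}. (if j = l then 1 else 0) * X l)"
      using inv j unfolding is_inverse_mat_def by (intro sum.cong refl) auto
    also have "\<dots> = (\<Sum>l\<in>{1..J}. if l = j then X l else 0)"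
      by (rule sum.cong) auto
    also have "\<dots> = X j" using j by (simp add: sum.delta)
    finally show "(LINT \<gamma>|lborel. of_real (\<phi> \<gamma>) * of_real (Cj C a b T B j t \<gamma>)) =
            (\<Sum>r=1..J. V j r * (\<Sum>\<^sub>\<infinity>m::int. S_term C c J T B r t \<phi> m))"
      unfolding X_def by simp
  qed
  have P3: "\<forall>t \<gamma>. C t \<gamma> = (\<Sum>j=1..J. Cj C a b T B j (t - of_int (a j) * T) (\<gamma> - of_int (b j) * B))"
    using part3[OF T_pos B_pos supp distinct] by blast
  show ?thesis using P1 P2 P3 by blast
qed


end
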